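(* Let $\Omega \subset \mathbb{R}^n$ be a bounded domain, $V$ a suitable function space (a subspace of $H^1(\Omega)$), $D \subseteq \mathbb{R}^d$ a parameter set with a probability distribution $\mathcal{P}$ on $D$. For each $\mathbf{p} \in D$ let $E = E_{\mathbf{p}}: V \to \mathbb{R}$ be an energy of the form $E(v) = \frac{1}{2}(A\nabla v, \nabla v) - (f, v)$, where either (i) $A = A(\mathbf{p}, x)$ does not depend on $v$, $A \geq \alpha > 0$, and $f \in L^2(\Omega)$; or (ii) $f = 0$ and $A = A(v)$ depends (differentiably, pointwise) on $v$ with $A(v) \geq \alpha > 0$ for all $v$ and $A'(u_h)u_h \geq 0$, where $u_h$ is the discrete minimizer below. Let $\mathcal{A}: D \to V$ be the solution operator $\mathcal{A}(\mathbf{p}) = u = \operatorname{argmin}_{v \in V} E(v)$. Let $V_h \subseteq V$ be a Lagrangian finite element space of polynomial degree $p$ on a mesh of $\Omega$ with maximal element diameter $h$, and let $\mathcal{A}_h: D \to V_h$, $\mathcal{A}_h(\mathbf{p}) = u_h = \operatorname{argmin}_{v \in V_h} E(v)$, be the discrete solution operator; assume the standard finite element a priori estimate $\|\nabla u - \nabla u_h\|^2 \lesssim h^{2p}\|D^{p+1}u\|^2$ holds. Let $\mathcal{A}_{h,\theta}: D \to V_h$ be any map (a neural network approximation of $\mathcal{A}_h$) satisfying the well-trainedness assumption $$\mathbb{E}_{\mathbf{p} \sim \mathcal{P}}\big[E(\mathcal{A}_{h,\theta}(\mathbf{p})) - E(\mathcal{A}_h(\mathbf{p}))\big] \leq \epsilon$$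 for some $\epsilon > 0$. Then there exists a positive constant $C$, independent of $h$ and $\epsilon$, such that $$\mathbb{E}_{\mathbf{p} \sim \mathcal{P}}\Big[\|\nabla \mathcal{A}(\mathbf{p}) - \nabla \mathcal{A}_{h,\theta}(\mathbf{p})\|_{L^2(\Omega)}^2\Big] \leq C\Big( h^{2p}\, \mathbb{E}_{\mathbf{p} \sim \mathcal{P}}\Big[\|D^{p+1}\mathcal{A}(\mathbf{p})\|_{L^2(\Omega)}^2\Big] + \epsilon\Big).$$
   Context: $(\cdot,\cdot)$ and $\|\cdot\|$ denote the $L^2(\Omega)$ inner product and norm; $D^{p+1}$ denotes the tensor of all partial derivatives of order $p+1$. The energy $E$ depends on the parameter $\mathbf{p}$ (through coefficients, right-hand side or boundary data). A neural network $\mathcal{A}_{h,\theta}$ is a parametrized map (here an MLP with weights $\theta$) from $D$ to the nodal values of functions in $V_h$; only the fact that it maps into $V_h$ is used. The symbol $\lesssim$ means $\leq$ up to a positive constant independent of $h$. *)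

theory Defs
  imports "HOL-Probability.Probability"
begin

definition partial :: "'n::finite \<Rightarrow> (real^'n \<Rightarrow> real) \<Rightarrow> real^'n \<Rightarrow> real" where
  "partial i \<phi> x = frechet_derivative \<phi> (at x) (axis i 1)"

fun partial_list :: "'n::finite list \<Rightarrow> (real^'n \<Rightarrow> real) \<Rightarrow> real^'n \<Rightarrow> real" where
  "partial_list [] \<phi> = \<phi>"
| "partial_list (i # is) \<phi> = partial i (partial_list is \<phi>)"

definition test_fun :: "(real^'n::finite) set \<Rightarrow> (real^'n \<Rightarrow> real) \<Rightarrow> bool" where
  "test_fun \<Omega> \<phi> \<longleftrightarrow>
     (\<forall>is x. partial_list is \<phi> differentiable (at x)) \<and>
     compact (closure {x. \<phi> x \<noteq> 0}) \<and> closure {x. \<phi> x \<noteq> 0} \<subseteq> \<Omega>"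

definition weak_deriv :: "(real^'n::finite) set \<Rightarrow> 'n list \<Rightarrow> (real^'n \<Rightarrow> real) \<Rightarrow> (real^'n \<Rightarrow> real) \<Rightarrow> bool" where
  "weak_deriv \<Omega> is u g \<longleftrightarrow>
     u \<in> borel_measurable (lebesgue_on \<Omega>) \<and> g \<in> borel_measurable (lebesgue_on \<Omega>) \<and>
     (\<forall>\<phi>. test_fun \<Omega> \<phi> \<longrightarrow>
        integrable (lebesgue_on \<Omega>) (\<lambda>x. u x * partial_list is \<phi> x) \<and>
        integrable (lebesgue_on \<Omega>) (\<lambda>x. g x * \<phi> x) \<and>
        (\<integral>x. u x * partial_list is \<phi> x \<partial>lebesgue_on \<Omega>)
          = (-1) ^ length is * (\<integral>x. g x * \<phi> x \<partial>lebesgue_on \<Omega>))"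

definition L2 :: "(real^'n::finite) set \<Rightarrow> (real^'n \<Rightarrow> real) \<Rightarrow> bool" where
  "L2 \<Omega> u \<longleftrightarrow> u \<in> borel_measurable (lebesgue_on \<Omega>) \<and>
     set_nn_integral lebesgue \<Omega> (\<lambda>x. ennreal ((u x)\<^sup>2)) < \<infinity>"

definition H1 :: "(real^'n::finite) set \<Rightarrow> (real^'n \<Rightarrow> real) set" where
  "H1 \<Omega> = {u. L2 \<Omega> u \<and> (\<forall>i. \<exists>g. weak_deriv \<Omega> [i] u g \<and> L2 \<Omega> g)}"

text \<open>Weak gradient (a representative; unique a.e. for H^1 functions).\<close>
definition weak_grad :: "(real^'n::finite) set \<Rightarrow> (real^'n \<Rightarrow> real) \<Rightarrow> real^'n \<Rightarrow> real^'n" where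
  "weak_grad \<Omega> u x = (\<chi> i. (SOME g. weak_deriv \<Omega> [i] u g) x)"

definition grad_dist2 :: "(real^'n::finite) set \<Rightarrow> (real^'n \<Rightarrow> real) \<Rightarrow> (real^'n \<Rightarrow> real) \<Rightarrow> ennreal" where
  "grad_dist2 \<Omega> u w =
     set_nn_integral lebesgue \<Omega> (\<lambda>x. ennreal ((norm (weak_grad \<Omega> u x - weak_grad \<Omega> w x))\<^sup>2))"

text \<open>|| D^m u ||_{L^2(\<Omega>)}^2 : sum over all entries of the tensor of partial derivatives of
  order m (indexed by lists of coordinates of length m); infinite if some weak derivative of
  order m does not exist in L^2.\<close>
definition Dnorm2 :: "(real^'n::finite) set \<Rightarrow> nat \<Rightarrow> (real^'n \<Rightarrow> real) \<Rightarrow> ennreal" where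
  "Dnorm2 \<Omega> m u =
     (\<Sum>is\<in>{is :: 'n list. length is = m}.
        if \<exists>g. weak_deriv \<Omega> is u g \<and> L2 \<Omega> g
        then set_nn_integral lebesgue \<Omega>
               (\<lambda>x. ennreal (((SOME g. weak_deriv \<Omega> is u g \<and> L2 \<Omega> g) x)\<^sup>2))
        else \<infinity>)"

definition lin_subspace :: "(real^'n::finite \<Rightarrow> real) set \<Rightarrow> bool" where
  "lin_subspace V \<longleftrightarrow> (\<lambda>x. 0) \<in> V \<and> (\<forall>v\<in>V. \<forall>w\<in>V. (\<lambda>x. v x + w x) \<in> V) \<and>
     (\<forall>c. \<forall>v\<in>V. (\<lambda>x. c * v x) \<in> V)"

definition bounded_domain :: "(real^'n::finite) set \<Rightarrow> bool" where
  "bounded_domain \<Omega> \<longleftrightarrow> open \<Omega> \<and> connected \<Omega> \<and> bounded \<Omega> \<and> \<Omega> \<noteq> {}"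

definition vertices :: "(real^'n::finite) set \<Rightarrow> (real^'n) set" where
  "vertices K = {x. x extreme_point_of K}"

definition is_simplex :: "(real^'n::finite) set \<Rightarrow> bool" where
  "is_simplex K \<longleftrightarrow> (\<exists>S. finite S \<and> card S = CARD('n) + 1 \<and> \<not> affine_dependent S \<and> K = convex hull S)"

definition is_mesh :: "(real^'n::finite) set \<Rightarrow> (real^'n) set set \<Rightarrow> bool" where
  "is_mesh \<Omega> T \<longleftrightarrow> finite T \<and> T \<noteq> {} \<and> (\<forall>K\<in>T. is_simplex K) \<and> \<Union>T = closure \<Omega> \<and>
     (\<forall>K\<in>T. \<forall>K'\<in>T. K \<noteq> K' \<longrightarrow>
        interior K \<inter> interior K' = {} \<and> K \<inter> K' = convex hull (vertices K \<inter> vertices K'))"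

definition mesh_size :: "(real^'n::finite) set set \<Rightarrow> real" where
  "mesh_size T = Max (diameter ` T)"

definition poly_deg :: "nat \<Rightarrow> (real^'n::finite \<Rightarrow> real) \<Rightarrow> bool" where
  "poly_deg p q \<longleftrightarrow> (\<exists>c :: ('n \<Rightarrow> nat) \<Rightarrow> real.
     q = (\<lambda>x. \<Sum>\<alpha>\<in>{\<alpha>. sum \<alpha> UNIV \<le> p}. c \<alpha> * (\<Prod>i\<in>UNIV. (x $ i) ^ \<alpha> i)))"

definition lagrange_fe :: "(real^'n::finite) set \<Rightarrow> (real^'n) set set \<Rightarrow> nat \<Rightarrow>
    (real^'n \<Rightarrow> real) set \<Rightarrow> (real^'n \<Rightarrow> real) set" where
  "lagrange_fe \<Omega> T p V = {v\<in>V. continuous_on (closure \<Omega>) v \<and>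
     (\<forall>K\<in>T. \<exists>q. poly_deg p q \<and> (\<forall>x\<in>K. v x = q x))}"

end

theory Submission
  imports Defs "HOL-Computational_Algebra.Polynomial"
begin

fun Ck :: "nat \<Rightarrow> (real \<Rightarrow> real) \<Rightarrow> bool" where
  "Ck 0 f = True"
| "Ck (Suc k) f = ((\<forall>x. f differentiable (at x)) \<and> Ck k (deriv f))"

definition smooth1 :: "(real \<Rightarrow> real) \<Rightarrow> bool" where
  "smooth1 f \<longleftrightarrow> (\<forall>k. Ck k f)"

lemma Ck_mono: "Ck (Suc k) f \<Longrightarrow> Ck k f"
  by (induction k arbitrary: f) auto

lemma smooth1_deriv: "smooth1 f \<Longrightarrow> smooth1 (deriv f)"
  unfolding smooth1_def by (metis Ck.simps(2))

lemma smooth1_differentiable: "smooth1 f \<Longrightarrow> f differentiable (at x)"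
  unfolding smooth1_def by (metis Ck.simps(2))

lemma smooth1_funpow: "smooth1 f \<Longrightarrow> smooth1 ((deriv ^^ k) f)"
  by (induction k) (auto intro: smooth1_deriv)

lemma deriv_at_real: "f differentiable (at x) \<Longrightarrow> (f has_real_derivative deriv f x) (at x)"
  using DERIV_deriv_iff_real_differentiable by blast

lemma Ck_add: "Ck k f \<Longrightarrow> Ck k g \<Longrightarrow> Ck k (\<lambda>t. f t + g t)"
proof (induction k arbitrary: f g)
  case 0 then show ?case by simp
next
  case (Suc k)
  have d: "deriv (\<lambda>t. f t + g t) = (\<lambda>t. deriv f t + deriv g t)"
    using Suc.prems by (intro ext DERIV_imp_deriv) (auto intro!: derivative_intros deriv_at_real)
  show ?case using Suc by (auto simp: d)
qed

lemma Ck_cmult: "Ck k f \<Longrightarrow> Ck k (\<lambda>t. c * f t)"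
proof (induction k arbitrary: f)
  case 0 then show ?case by simp
next
  case (Suc k)
  have d: "deriv (\<lambda>t. c * f t) = (\<lambda>t. c * deriv f t)"
    using Suc.prems by (intro ext DERIV_imp_deriv DERIV_cmult deriv_at_real) auto
  show ?case using Suc by (auto simp: d)
qed

lemma Ck_mult: "Ck k f \<Longrightarrow> Ck k g \<Longrightarrow> Ck k (\<lambda>t. f t * g t)"
proof (induction k arbitrary: f g)
  case 0 then show ?case by simp
next
  case (Suc k)
  have d: "deriv (\<lambda>t. f t * g t) = (\<lambda>t. deriv f t * g t + f t * deriv g t)"
    using Suc.prems by (intro ext DERIV_imp_deriv) (auto intro!: derivative_eq_intros deriv_at_real)
  have "Ck k f" "Ck k g" using Suc.prems Ck_mono by blast+
  then show ?case using Suc by (auto simp: d intro!: Ck_add)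
qed

lemma Ck_affine: "Ck k f \<Longrightarrow> Ck k (\<lambda>t. f (c * t + d))"
proof (induction k arbitrary: f)
  case 0 then show ?case by simp
next
  case (Suc k)
  have d: "deriv (\<lambda>t. f (c * t + d)) = (\<lambda>t. (\<lambda>s. c * deriv f s) (c * t + d))"
  proof (intro ext DERIV_imp_deriv)
    fix t
    have "(f has_real_derivative deriv f (c*t+d)) (at (c*t+d))" using Suc.prems by (auto intro: deriv_at_real)
    moreover have "((\<lambda>t. c * t + d) has_real_derivative c) (at t)"
      by (auto intro!: derivative_eq_intros)
    ultimately have "((\<lambda>t. f (c * t + d)) has_real_derivative deriv f (c*t+d) * c) (at t)"
      by (rule DERIV_chain2)
    then show "((\<lambda>t. f (c * t + d)) has_real_derivative (\<lambda>s. c * deriv f s) (c * t + d)) (at t)"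
      by (simp add: mult.commute)
  qed
  have diff: "(\<lambda>t. f (c * t + d)) differentiable (at x)" for x
  proof -
    have "(f has_real_derivative deriv f (c*x+d)) (at (c*x+d))" using Suc.prems by (auto intro: deriv_at_real)
    moreover have "((\<lambda>t. c * t + d) has_real_derivative c) (at x)"
      by (auto intro!: derivative_eq_intros)
    ultimately have "((\<lambda>t. f (c * t + d)) has_real_derivative deriv f (c*x+d) * c) (at x)"
      by (rule DERIV_chain2)
    then show ?thesis using real_differentiable_def by blast
  qed
  have "Ck k (\<lambda>s. c * deriv f s)" using Suc.prems by (auto intro: Ck_cmult)
  then show ?case using Suc.IH diff by (simp add: d)
qed

lemma smooth1_mult: "smooth1 f \<Longrightarrow> smooth1 g \<Longrightarrow> smooth1 (\<lambda>t. f t * g t)"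
  unfolding smooth1_def by (auto intro: Ck_mult)

lemma smooth1_affine: "smooth1 f \<Longrightarrow> smooth1 (\<lambda>t. f (c * t + d))"
  unfolding smooth1_def by (auto intro: Ck_affine)

lemma lim_poly_exp: "((\<lambda>s. poly P s * exp (- s)) \<longlongrightarrow> (0::real)) at_top"
proof -
  have "((\<lambda>s. \<Sum>i\<le>degree P. coeff P i * (s ^ i / exp s)) \<longlongrightarrow> (\<Sum>i\<le>degree P. coeff P i * 0)) at_top"
    by (intro tendsto_sum tendsto_mult tendsto_const tendsto_power_div_exp_0)
  moreover have "(\<Sum>i\<le>degree P. coeff P i * (s ^ i / exp s)) = poly P s * exp (- s)" for s
    by (simp add: poly_altdef sum_distrib_right exp_minus divide_inverse mult.assoc)
  ultimately show ?thesis by simp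
qed

definition gP :: "real poly \<Rightarrow> real \<Rightarrow> real" where
  "gP P t = (if 0 < t then poly P (inverse t) * exp (- inverse t) else 0)"

definition Qp :: "real poly \<Rightarrow> real poly" where
  "Qp P = [:0,0,1:] * (P - pderiv P)"

lemma gP_deriv_pos:
  assumes "0 < t"
  shows "(gP P has_real_derivative gP (Qp P) t) (at t)"
proof -
  have "((\<lambda>t. poly P (inverse t) * exp (- inverse t)) has_real_derivative
      poly (pderiv P) (inverse t) * (- inverse (t^2)) * exp (- inverse t)
      + poly P (inverse t) * (exp (- inverse t) * inverse (t^2))) (at t)"
  proof -
    have i: "(inverse has_real_derivative - (inverse t * inverse t)) (at t)"
      using assms by (auto intro!: derivative_eq_intros)
    have p: "((\<lambda>t. poly P (inverse t)) has_real_derivative poly (pderiv P) (inverse t) * (- (inverse t * inverse t))) (at t)"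
      by (rule DERIV_chain2[OF poly_DERIV i])
    have e: "((\<lambda>t. exp (- inverse t)) has_real_derivative exp (- inverse t) * (inverse t * inverse t)) (at t)"
      using DERIV_chain2[OF DERIV_exp DERIV_minus[OF i]] by simp
    show ?thesis using DERIV_mult[OF p e] by (simp add: power2_eq_square algebra_simps)
  qed
  moreover have "poly (pderiv P) (inverse t) * (- inverse (t^2)) * exp (- inverse t)
      + poly P (inverse t) * (exp (- inverse t) * inverse (t^2)) = gP (Qp P) t"
    using assms by (simp add: gP_def Qp_def algebra_simps power2_eq_square)
  ultimately have "((\<lambda>t. poly P (inverse t) * exp (- inverse t)) has_real_derivative gP (Qp P) t) (at t)"
    by simp
  then show ?thesis
    by (rule has_field_derivative_transform_within_open[where S="{0<..}"]) (use assms in \<open>auto simp: gP_def\<close>)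
qed

lemma gP_deriv_neg:
  assumes "t < 0"
  shows "(gP P has_real_derivative gP (Qp P) t) (at t)"
proof -
  have "((\<lambda>t. 0) has_real_derivative 0) (at t)" by simp
  then have "(gP P has_real_derivative 0) (at t)"
    by (rule has_field_derivative_transform_within_open[where S="{..<0}"]) (use assms in \<open>auto simp: gP_def\<close>)
  then show ?thesis using assms by (simp add: gP_def)
qed

lemma gP_deriv_0: "(gP P has_real_derivative gP (Qp P) 0) (at 0)"
proof -
  have "((\<lambda>y. (gP P y - gP P 0) / (y - 0)) \<longlongrightarrow> 0) (at (0::real))"
  proof (rule filterlim_split_at)
    show "((\<lambda>y. (gP P y - gP P 0) / (y - 0)) \<longlongrightarrow> 0) (at_left (0::real))"
    proof (rule Lim_transform_eventually[OF tendsto_const])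
      show "\<forall>\<^sub>F x in at_left 0. 0 = (gP P x - gP P 0) / (x - 0)"
        by (auto simp: eventually_at_left_real[of "-1" 0] gP_def intro!: eventually_mono[OF eventually_at_left_real[of "-1" 0]])
    qed
    have "((\<lambda>y. poly (pCons 0 P) (inverse y) * exp (- inverse y)) \<longlongrightarrow> 0) (at_right (0::real))"
      by (rule filterlim_compose[OF lim_poly_exp filterlim_inverse_at_top_right])
    then show "((\<lambda>y. (gP P y - gP P 0) / (y - 0)) \<longlongrightarrow> 0) (at_right (0::real))"
    proof (rule Lim_transform_eventually)
      show "\<forall>\<^sub>F x in at_right 0. poly (pCons 0 P) (inverse x) * exp (- inverse x) = (gP P x - gP P 0) / (x - 0)"
        by (intro eventually_mono[OF eventually_at_right_real[of 0 1]]) (auto simp: gP_def field_simps)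
    qed
  qed
  then have "(gP P has_real_derivative 0) (at 0)"
    by (simp add: has_field_derivative_iff)
  then show ?thesis by (simp add: gP_def)
qed

lemma gP_deriv: "(gP P has_real_derivative gP (Qp P) t) (at t)"
  using gP_deriv_pos gP_deriv_neg gP_deriv_0 by (metis linorder_neqE_linordered_idom)

lemma Ck_gP: "Ck k (gP P)"
proof (induction k arbitrary: P)
  case 0 then show ?case by simp
next
  case (Suc k)
  have "deriv (gP P) = gP (Qp P)"
    by (intro ext DERIV_imp_deriv gP_deriv)
  moreover have "gP P differentiable (at x)" for x
    using gP_deriv real_differentiable_def by blast
  ultimately show ?case using Suc by simp
qed

definition hexp :: "real \<Rightarrow> real" where
  "hexp t = (if 0 < t then exp (- inverse t) else 0)"

lemma hexp_gP: "hexp = gP 1"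
  by (auto simp: hexp_def gP_def)

lemma smooth1_hexp: "smooth1 hexp"
  unfolding smooth1_def hexp_gP by (auto intro: Ck_gP)

lemma hexp_nonneg: "0 \<le> hexp t" and hexp_le1: "hexp t \<le> 1"
  by (auto simp: hexp_def)

lemma hexp_pos: "0 < t \<Longrightarrow> 0 < hexp t"
  by (auto simp: hexp_def)

lemma hexp_zero: "t \<le> 0 \<Longrightarrow> hexp t = 0"
  by (auto simp: hexp_def)

lemma hexp_mono: "0 < s \<Longrightarrow> s \<le> t \<Longrightarrow> hexp s \<le> hexp t"
  by (auto simp: hexp_def le_imp_inverse_le)

lemma hexp_lim: "0 < u \<Longrightarrow> (\<lambda>k. hexp (real (Suc k) * u)) \<longlonglongrightarrow> 1"
proof -
  assume u: "0 < u"
  have "(\<lambda>k. inverse (real (Suc k) * u)) \<longlonglongrightarrow> 0"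
  proof (rule tendsto_inverse_0_at_top)
    have "filterlim (\<lambda>k. real (Suc k)) at_top sequentially"
      using filterlim_compose[OF filterlim_real_sequentially filterlim_Suc] by (simp add: o_def)
    then show "filterlim (\<lambda>k. real (Suc k) * u) at_top sequentially"
      using u by (intro filterlim_at_top_mult_tendsto_pos[OF tendsto_const]) auto
  qed
  then have "(\<lambda>k. exp (- inverse (real (Suc k) * u))) \<longlonglongrightarrow> exp (- 0)"
    by (intro tendsto_intros)
  moreover have "hexp (real (Suc k) * u) = exp (- inverse (real (Suc k) * u))" for k
    using u by (simp add: hexp_def)
  ultimately show ?thesis by simp
qed

definition phi :: "('n::finite \<Rightarrow> real \<Rightarrow> real) \<Rightarrow> real^'n \<Rightarrow> real" where
  "phi F x = (\<Prod>i\<in>UNIV. F i (x$i))"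

lemma comp_nth_has_derivative:
  fixes f :: "real \<Rightarrow> real" and x :: "real^'n::finite"
  assumes "f differentiable (at (x$i))"
  shows "((\<lambda>x. f (x$i)) has_derivative (\<lambda>y. deriv f (x$i) * y$i)) (at x)"
proof -
  have "(f has_derivative (\<lambda>h. h * deriv f (x$i))) (at (x$i))"
    using deriv_at_real[OF assms] unfolding has_field_derivative_def by (simp add: mult_commute_abs)
  moreover have "((\<lambda>x. x$i) has_derivative (\<lambda>y. y$i)) (at x)"
    by (rule bounded_linear_imp_has_derivative[OF bounded_linear_vec_nth])
  ultimately have "((\<lambda>x. f (x$i)) has_derivative (\<lambda>y. (y$i) * deriv f (x$i))) (at x)"
    using has_derivative_compose[of "\<lambda>x. x$i" "\<lambda>y. y$i" x UNIV f] by (simp add: o_def)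
  then show ?thesis by (simp add: mult.commute)
qed

lemma phi_has_derivative:
  assumes "\<And>i t. F i differentiable (at t)"
  shows "(phi F has_derivative (\<lambda>y. \<Sum>i\<in>UNIV. deriv (F i) (x$i) * y$i * (\<Prod>j\<in>UNIV-{i}. F j (x$j)))) (at x)"
  unfolding phi_def
  by (rule has_derivative_prod) (rule comp_nth_has_derivative[OF assms])

lemma phi_differentiable:
  assumes "\<And>i t. F i differentiable (at t)"
  shows "phi F differentiable (at x)"
  by (rule differentiableI[OF phi_has_derivative[OF assms]])

lemma partial_phi:
  assumes "\<And>i t. F i differentiable (at t)"
  shows "partial j (phi F) = phi (\<lambda>i. if i = j then deriv (F i) else F i)"
proof
  fix x
  have D: "(phi F has_derivative (\<lambda>y. \<Sum>i\<in>UNIV. deriv (F i) (x$i) * y$i * (\<Prod>k\<in>UNIV-{i}. F k (x$k)))) (at x)"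
    by (rule phi_has_derivative[OF assms])
  have "partial j (phi F) x = (\<Sum>i\<in>UNIV. deriv (F i) (x$i) * (axis j 1 :: real^_)$i * (\<Prod>k\<in>UNIV-{i}. F k (x$k)))"
    unfolding partial_def frechet_derivative_at[OF D, symmetric] by (rule refl)
  also have "\<dots> = deriv (F j) (x$j) * (\<Prod>k\<in>UNIV-{j}. F k (x$k))"
    by (subst sum.remove[of UNIV j]) (auto simp: axis_def)
  also have "\<dots> = phi (\<lambda>i. if i = j then deriv (F i) else F i) x"
    unfolding phi_def by (subst prod.remove[of UNIV j]) (auto intro!: prod.cong)
  finally show "partial j (phi F) x = phi (\<lambda>i. if i = j then deriv (F i) else F i) x" .
qed

lemma partial_list_phi:
  assumes "\<And>i. smooth1 (F i)"
  shows "partial_list is (phi F) = phi (\<lambda>i. (deriv ^^ count_list is i) (F i))"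
proof (induction "is")
  case Nil then show ?case by simp
next
  case (Cons j js)
  have d: "\<And>i t. (deriv ^^ count_list js i) (F i) differentiable (at t)"
    using assms smooth1_funpow smooth1_differentiable by blast
  show ?case
    by (simp add: Cons partial_phi[OF d]) (auto intro!: arg_cong[where f=phi])
qed

lemma phi_test_fun:
  assumes sm: "\<And>i. smooth1 (F i)"
    and supp: "\<And>x. phi F x \<noteq> 0 \<Longrightarrow> x \<in> cbox a b"
    and sub: "cbox a b \<subseteq> \<Omega>"
  shows "test_fun \<Omega> (phi F)"
  unfolding test_fun_def
proof (intro conjI allI)
  fix "is" x
  have d: "\<And>i t. (deriv ^^ count_list is i) (F i) differentiable (at t)"
    using sm smooth1_funpow smooth1_differentiable by blast
  show "partial_list is (phi F) differentiable (at x)"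
    unfolding partial_list_phi[OF sm] by (rule phi_differentiable[OF d])
next
  have c: "closure {x. phi F x \<noteq> 0} \<subseteq> cbox a b"
    using supp by (intro closure_minimal) auto
  then show "compact (closure {x. phi F x \<noteq> 0})"
    by (meson bounded_cbox bounded_subset closed_closure compact_eq_bounded_closed)
  show "closure {x. phi F x \<noteq> 0} \<subseteq> \<Omega>" using c sub by blast
qed

definition psi :: "real \<Rightarrow> real \<Rightarrow> real \<Rightarrow> real \<Rightarrow> real" where
  "psi s a b t = hexp (s * t + (- s * a)) * hexp ((- s) * t + s * b)"

lemma smooth1_psi: "smooth1 (psi s a b)"
  unfolding psi_def[abs_def]
  by (intro smooth1_mult smooth1_affine smooth1_hexp)

lemma psi_nonneg: "0 \<le> psi s a b t" and psi_le1: "psi s a b t \<le> 1"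
  unfolding psi_def by (auto intro!: mult_nonneg_nonneg mult_le_one hexp_nonneg hexp_le1)

lemma psi_zero: "0 < s \<Longrightarrow> t \<le> a \<or> b \<le> t \<Longrightarrow> psi s a b t = 0"
proof -
  assume s: "0 < s" and t: "t \<le> a \<or> b \<le> t"
  have e1: "s * t + (- s * a) = s * (t - a)" and e2: "(- s) * t + s * b = s * (b - t)"
    by (simp_all add: algebra_simps)
  show ?thesis
  proof (cases "t \<le> a")
    case True
    then have "s * (t - a) \<le> 0" using s by (simp add: mult_nonneg_nonpos)
    then show ?thesis unfolding psi_def e1 by (simp add: hexp_zero)
  next
    case False
    then have "s * (b - t) \<le> 0" using s t by (simp add: mult_nonneg_nonpos)
    then show ?thesis unfolding psi_def e2 by (simp add: hexp_zero)
  qed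
qed

lemma psi_lim: "a < t \<Longrightarrow> t < b \<Longrightarrow> (\<lambda>k. psi (real (Suc k)) a b t) \<longlonglongrightarrow> 1"
proof -
  assume "a < t" "t < b"
  then have "(\<lambda>k. hexp (real (Suc k) * (t - a)) * hexp (real (Suc k) * (b - t))) \<longlonglongrightarrow> 1 * 1"
    by (intro tendsto_mult hexp_lim) auto
  then show ?thesis by (simp add: psi_def algebra_simps)
qed

lemma psi_lower:
  assumes "a < c" "c \<le> t" "t \<le> d" "d < b"
  shows "hexp (c - a) * hexp (b - d) \<le> psi 1 a b t"
proof -
  have "psi 1 a b t = hexp (t - a) * hexp (b - t)" by (simp add: psi_def)
  moreover have "hexp (c - a) \<le> hexp (t - a)" "hexp (b - d) \<le> hexp (b - t)"
    using assms by (auto intro!: hexp_mono)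
  ultimately show ?thesis by (simp add: mult_mono hexp_nonneg)
qed

lemma phi_nonneg: "(\<And>i t. 0 \<le> F i t) \<Longrightarrow> 0 \<le> phi F x"
  unfolding phi_def by (auto intro: prod_nonneg)

lemma phi_le1: "(\<And>i t. 0 \<le> F i t) \<Longrightarrow> (\<And>i t. F i t \<le> 1) \<Longrightarrow> phi F x \<le> 1"
  unfolding phi_def by (auto intro: prod_le_1)

lemma ae_zero_of_box_integrals:
  fixes H :: "'a::euclidean_space \<Rightarrow> real"
  assumes intH: "integrable lebesgue H"
    and box0: "\<And>a b. (\<integral>x. H x * indicator (box a b) x \<partial>lebesgue) = 0"
  shows "AE x in lebesgue. H x = 0"
proof -
  have Hm: "H \<in> borel_measurable (completion lborel)" using intH by auto
  obtain H' where H'm: "H' \<in> borel_measurable lborel" and ae: "AE x in lborel. H x = H' x"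
    using completion_ex_borel_measurable_real[OF Hm] by blast
  have aec: "AE x in lebesgue. H x = H' x" using AE_completion[OF ae] .
  have "integrable lebesgue H'" using integrable_cong_AE[OF Hm _ aec] intH
    using H'm measurable_completion by (metis (mono_tags, lifting) AE_cong aec integrable_cong_AE)
  then have intH': "integrable lborel H'" using integrable_completion[OF H'm] by simp
  have box0': "(\<integral>x. H' x * indicator (box a b) x \<partial>lborel) = 0" for a b
  proof -
    have "(\<integral>x. H' x * indicator (box a b) x \<partial>lborel) = (\<integral>x. H' x * indicator (box a b) x \<partial>lebesgue)"
      by (rule integral_completion[symmetric]) (use H'm in measurable)
    also have "\<dots> = (\<integral>x. H x * indicator (box a b) x \<partial>lebesgue)"
    proof (rule integral_cong_AE)
      have I: "(indicator (box a b)::'a\<Rightarrow>real) \<in> borel_measurable lebesgue"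
        by (rule measurable_completion) simp
      have Hl: "H' \<in> borel_measurable lebesgue" using H'm measurable_completion by blast
      show "(\<lambda>x. H' x * indicator (box a b) x) \<in> borel_measurable lebesgue"
        using Hl I by (rule borel_measurable_times)
      show "(\<lambda>x. H x * indicator (box a b) x) \<in> borel_measurable lebesgue"
        using Hm I by (rule borel_measurable_times)
      show "AE x in lebesgue. H' x * indicator (box a b) x = H x * indicator (box a b) x"
        using aec by eventually_elim simp
    qed
    finally show ?thesis using box0 by simp
  qed
  define P where "P a b x = max 0 (H' x) * indicator (box a b) x" for a b x
  define Q where "Q a b x = max 0 (- H' x) * indicator (box a b) x" for a b x
  have PQm [measurable]: "P a b \<in> borel_measurable lborel" "Q a b \<in> borel_measurable lborel" for a b
    unfolding P_def Q_def using H'm by auto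
  have intP: "integrable lborel (P a b)" "integrable lborel (Q a b)" for a b
    by (rule Bochner_Integration.integrable_bound[OF intH' PQm(1)], auto simp: P_def indicator_def)
       (rule Bochner_Integration.integrable_bound[OF intH' PQm(2)], auto simp: Q_def indicator_def)
  have PQ: "integral\<^sup>L lborel (P a b) = integral\<^sup>L lborel (Q a b)" for a b
  proof -
    have "(\<lambda>x. H' x * indicator (box a b) x) = (\<lambda>x. P a b x - Q a b x)"
      by (auto simp: P_def Q_def indicator_def max_def)
    then have "0 = (\<integral>x. P a b x - Q a b x \<partial>lborel)" using box0'[of a b] by simp
    also have "\<dots> = integral\<^sup>L lborel (P a b) - integral\<^sup>L lborel (Q a b)"
      using intP by (rule Bochner_Integration.integral_diff)
    finally show ?thesis by simp
  qed
  define N1 where "N1 = density lborel (\<lambda>x. ennreal (H' x))"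
  define N2 where "N2 = density lborel (\<lambda>x. ennreal (- H' x))"
  have e1: "emeasure N1 (box a b) = ennreal (integral\<^sup>L lborel (P a b))" for a b
  proof -
    have "emeasure N1 (box a b) = (\<integral>\<^sup>+ x. ennreal (H' x) * indicator (box a b) x \<partial>lborel)"
      unfolding N1_def using H'm by (subst emeasure_density) auto
    also have "\<dots> = (\<integral>\<^sup>+ x. ennreal (P a b x) \<partial>lborel)"
      by (intro nn_integral_cong) (auto simp: P_def indicator_def max_def ennreal_neg)
    also have "\<dots> = ennreal (integral\<^sup>L lborel (P a b))"
      by (rule nn_integral_eq_integral[OF intP(1)]) (auto simp: P_def)
    finally show ?thesis .
  qed
  have e2: "emeasure N2 (box a b) = ennreal (integral\<^sup>L lborel (Q a b))" for a b
  proof -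
    have "emeasure N2 (box a b) = (\<integral>\<^sup>+ x. ennreal (- H' x) * indicator (box a b) x \<partial>lborel)"
      unfolding N2_def using H'm by (subst emeasure_density) auto
    also have "\<dots> = (\<integral>\<^sup>+ x. ennreal (Q a b x) \<partial>lborel)"
      by (intro nn_integral_cong) (auto simp: Q_def indicator_def max_def ennreal_neg)
    also have "\<dots> = ennreal (integral\<^sup>L lborel (Q a b))"
      by (rule nn_integral_eq_integral[OF intP(2)]) (auto simp: Q_def)
    finally show ?thesis .
  qed
  have "N1 = N2"
  proof (rule measure_eqI_generator_eq)
    let ?E = "range (\<lambda>(a, b). box a b::'a set)"
    show "Int_stable ?E"
      by (auto simp: Int_stable_def box_Int_box)
    show "?E \<subseteq> Pow UNIV" "sets N1 = sigma_sets UNIV ?E" "sets N2 = sigma_sets UNIV ?E"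
      by (simp_all add: N1_def N2_def borel_eq_box)
    let ?A = "\<lambda>n::nat. box (- (real n *\<^sub>R One)) (real n *\<^sub>R One) :: 'a set"
    show "range ?A \<subseteq> ?E" "(\<Union>i. ?A i) = UNIV"
      unfolding UN_box_eq_UNIV by auto
    show "emeasure N1 (?A i) \<noteq> \<infinity>" for i by (simp add: e1)
    show "emeasure N1 X = emeasure N2 X" if "X \<in> ?E" for X
      using that e1 e2 PQ by auto
  qed
  then have "AE x in lborel. ennreal (H' x) = ennreal (- H' x)"
    unfolding N1_def N2_def using H'm by (intro sigma_finite_measure.density_unique[OF sigma_finite_lborel]) auto
  then have "AE x in lborel. H' x = 0"
  proof eventually_elim
    fix x assume e: "ennreal (H' x) = ennreal (- H' x)"
    show "H' x = 0"
    proof (cases "H' x \<ge> 0")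
      case True then show ?thesis using e by (simp add: ennreal_neg)
    next
      case False then show ?thesis using e by (simp add: ennreal_neg)
    qed
  qed
  then have "AE x in lebesgue. H' x = 0" by (rule AE_completion)
  with aec show ?thesis by eventually_elim simp
qed

lemma sets_lebesgue_on_indicator:
  fixes S :: "'a::euclidean_space set"
  assumes "A \<in> sets borel"
  shows "(indicator A :: 'a \<Rightarrow> real) \<in> borel_measurable (lebesgue_on S)"
proof -
  have "(indicator A :: 'a \<Rightarrow> real) \<in> borel_measurable lebesgue"
    by (rule measurable_completion) (use assms in simp)
  then show ?thesis by (rule measurable_restrict_space1)
qed

lemma fund_local:
  fixes g :: "real^'n::finite \<Rightarrow> real"
  assumes Om: "open \<Omega>"
    and gm: "g \<in> borel_measurable (lebesgue_on \<Omega>)"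
    and T: "\<And>\<phi>. test_fun \<Omega> \<phi> \<Longrightarrow> integrable (lebesgue_on \<Omega>) (\<lambda>x. g x * \<phi> x) \<and>
               (\<integral>x. g x * \<phi> x \<partial>lebesgue_on \<Omega>) = 0"
    and ab: "cbox a b \<subseteq> \<Omega>" and cd: "cbox c d \<subseteq> box a b"
  shows "negligible {x \<in> box c d. g x \<noteq> 0}"
proof (cases "box c d = {}")
  case True then show ?thesis by simp
next
  case False
  then have cdi: "\<And>i. c$i < d$i" by (simp add: interval_ne_empty_cart)
  then have "c \<in> cbox c d" "d \<in> cbox c d" by (auto simp: mem_box_cart less_imp_le)
  then have "c \<in> box a b" "d \<in> box a b" using cd by blast+
  then have ac: "\<And>i. a$i < c$i" and db: "\<And>i. d$i < b$i" unfolding mem_box_cart by blast+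
  have Omeas: "\<Omega> \<in> sets lebesgue" using Om by simp
  define \<Phi> where "\<Phi> = phi (\<lambda>i. psi 1 (a$i) (b$i))"
  define m where "m = (\<Prod>i\<in>UNIV. hexp (c$i - a$i) * hexp (b$i - d$i))"
  have m_pos: "0 < m" unfolding m_def using ac db
    by (intro prod_pos) (auto intro!: mult_pos_pos hexp_pos)
  have \<Phi>_test: "test_fun \<Omega> \<Phi>"
    unfolding \<Phi>_def
  proof (rule phi_test_fun[OF smooth1_psi _ ab])
    fix x assume "phi (\<lambda>i. psi 1 (a$i) (b$i)) x \<noteq> 0"
    then have "\<forall>i. psi 1 (a$i) (b$i) (x$i) \<noteq> 0" by (auto simp: phi_def)
    then have "\<forall>i. a$i < x$i \<and> x$i < b$i" using psi_zero[of 1] by (meson not_le zero_less_one)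
    then show "x \<in> cbox a b" by (auto simp: mem_box_cart less_imp_le)
  qed
  have \<Phi>_low: "m \<le> \<Phi> x" if "x \<in> cbox c d" for x
    unfolding m_def \<Phi>_def phi_def
  proof (rule prod_mono)
    fix i :: 'n
    show "0 \<le> hexp (c$i - a$i) * hexp (b$i - d$i) \<and> hexp (c$i - a$i) * hexp (b$i - d$i) \<le> psi 1 (a$i) (b$i) (x$i)"
      using that ac db by (auto intro!: psi_lower mult_nonneg_nonneg hexp_nonneg simp: mem_box_cart)
  qed
  have \<Phi>_nonneg: "0 \<le> \<Phi> x" for x unfolding \<Phi>_def by (rule phi_nonneg) (rule psi_nonneg)
  define G where "G x = g x * indicator (box c d) x" for x
  have Gm: "G \<in> borel_measurable (lebesgue_on \<Omega>)"
    unfolding G_def by (intro borel_measurable_times gm sets_lebesgue_on_indicator) simp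
  have intG: "integrable (lebesgue_on \<Omega>) G"
  proof (rule Bochner_Integration.integrable_bound[OF _ Gm])
    show "integrable (lebesgue_on \<Omega>) (\<lambda>x. g x * \<Phi> x / m)"
      using T[OF \<Phi>_test] by simp
    show "AE x in lebesgue_on \<Omega>. norm (G x) \<le> norm (g x * \<Phi> x / m)"
    proof (rule AE_I2)
      fix x
      show "norm (G x) \<le> norm (g x * \<Phi> x / m)"
      proof (cases "x \<in> box c d")
        case True
        then have "m \<le> \<Phi> x" using \<Phi>_low box_subset_cbox by blast
        then have "1 \<le> \<Phi> x / m" using m_pos by simp
        then have "\<bar>g x\<bar> * 1 \<le> \<bar>g x\<bar> * (\<Phi> x / m)" by (intro mult_left_mono) auto
        then show ?thesis using True m_pos \<Phi>_nonneg[of x] by (simp add: G_def abs_mult)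
      qed (simp add: G_def)
    qed
  qed
  have sub0: "(\<integral>x. g x * indicator (box a' b') x \<partial>lebesgue_on \<Omega>) = 0"
    if ca: "\<And>i. c$i \<le> a'$i" and bd: "\<And>i. b'$i \<le> d$i" for a' b'
  proof -
    define \<phi> where "\<phi> k = phi (\<lambda>i. psi (real (Suc k)) (a'$i) (b'$i))" for k
    have box_sub: "box a' b' \<subseteq> box c d"
    proof
      fix x assume "x \<in> box a' b'"
      then have "\<forall>i. a'$i < x$i \<and> x$i < b'$i" by (simp add: mem_box_cart)
      then have "\<forall>i. c$i < x$i \<and> x$i < d$i" using ca bd by (meson order.strict_trans1 order.strict_trans2)
      then show "x \<in> box c d" by (simp add: mem_box_cart)
    qed
    have \<phi>_supp: "\<phi> k x \<noteq> 0 \<Longrightarrow> x \<in> box a' b'" for k x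
    proof -
      assume nz: "\<phi> k x \<noteq> 0"
      have "a'$i < x$i \<and> x$i < b'$i" for i
      proof (rule ccontr)
        assume "\<not> (a'$i < x$i \<and> x$i < b'$i)"
        then have "x$i \<le> a'$i \<or> b'$i \<le> x$i" by auto
        then have "psi (real (Suc k)) (a'$i) (b'$i) (x$i) = 0" by (intro psi_zero) auto
        then have "\<phi> k x = 0" unfolding \<phi>_def phi_def by (intro prod_zero) auto
        then show False using nz by simp
      qed
      then show "x \<in> box a' b'" by (simp add: mem_box_cart)
    qed
    have \<phi>_test: "test_fun \<Omega> (\<phi> k)" for k
      unfolding \<phi>_def
    proof (rule phi_test_fun[OF smooth1_psi])
      have "cbox a' b' \<subseteq> cbox c d" using ca bd by (intro subset_interval_imp_cart(1)) blast
      then show "cbox a' b' \<subseteq> \<Omega>" using cd ab box_subset_cbox by blast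
      fix x assume "phi (\<lambda>i. psi (real (Suc k)) (a'$i) (b'$i)) x \<noteq> 0"
      then have "x \<in> box a' b'" using \<phi>_supp[of k x] unfolding \<phi>_def by simp
      then show "x \<in> cbox a' b'" using box_subset_cbox by blast
    qed
    have lim: "(\<lambda>k. (\<integral>x. g x * \<phi> k x \<partial>lebesgue_on \<Omega>)) \<longlonglongrightarrow> (\<integral>x. g x * indicator (box a' b') x \<partial>lebesgue_on \<Omega>)"
    proof (rule integral_dominated_convergence[where w="\<lambda>x. norm (G x)"])
      show "(\<lambda>x. g x * indicator (box a' b') x) \<in> borel_measurable (lebesgue_on \<Omega>)"
        by (intro borel_measurable_times gm sets_lebesgue_on_indicator) simp
      show "(\<lambda>x. g x * \<phi> k x) \<in> borel_measurable (lebesgue_on \<Omega>)" for k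
        using T[OF \<phi>_test] by auto
      show "integrable (lebesgue_on \<Omega>) (\<lambda>x. norm (G x))" using intG by auto
      show "AE x in lebesgue_on \<Omega>. (\<lambda>k. g x * \<phi> k x) \<longlonglongrightarrow> g x * indicator (box a' b') x"
      proof (rule AE_I2)
        fix x
        show "(\<lambda>k. g x * \<phi> k x) \<longlonglongrightarrow> g x * indicator (box a' b') x"
        proof (cases "x \<in> box a' b'")
          case True
          then have "\<And>i. a'$i < x$i \<and> x$i < b'$i" by (auto simp: mem_box_cart)
          then have "(\<lambda>k. \<Prod>i\<in>UNIV. psi (real (Suc k)) (a'$i) (b'$i) (x$i)) \<longlonglongrightarrow> (\<Prod>i\<in>(UNIV::'n set). 1)"
            by (intro tendsto_prod psi_lim) auto
          then have "(\<lambda>k. \<phi> k x) \<longlonglongrightarrow> 1" by (simp add: \<phi>_def phi_def)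
          then show ?thesis using True by (auto intro!: tendsto_eq_intros)
        next
          case False
          then have "\<phi> k x = 0" for k using \<phi>_supp by blast
          then show ?thesis using False by simp
        qed
      qed
      show "AE x in lebesgue_on \<Omega>. norm (g x * \<phi> k x) \<le> norm (G x)" for k
      proof (rule AE_I2)
        fix x
        show "norm (g x * \<phi> k x) \<le> norm (G x)"
        proof (cases "x \<in> box a' b'")
          case True
          then have "x \<in> box c d" using box_sub by blast
          moreover have "\<phi> k x \<le> 1" "0 \<le> \<phi> k x" unfolding \<phi>_def
            by (intro phi_le1 phi_nonneg psi_nonneg psi_le1)+
          ultimately show ?thesis by (simp add: G_def abs_mult mult_left_le)
        next
          case False
          then have "\<phi> k x = 0" using \<phi>_supp by blast
          then show ?thesis by simp
        qed
      qed
    qed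
    moreover have "(\<integral>x. g x * \<phi> k x \<partial>lebesgue_on \<Omega>) = 0" for k using T[OF \<phi>_test] by blast
    ultimately have "(\<lambda>k. 0) \<longlonglongrightarrow> (\<integral>x. g x * indicator (box a' b') x \<partial>lebesgue_on \<Omega>)" by simp
    then show ?thesis using LIMSEQ_unique[OF tendsto_const] by metis
  qed
  define H where "H x = indicator \<Omega> x *\<^sub>R G x" for x
  have intH: "integrable lebesgue H"
    using intG unfolding H_def by (subst integrable_restrict_space[symmetric]) (use Omeas in auto)
  have boxH: "(\<integral>x. H x * indicator (box a'' b'') x \<partial>lebesgue) = 0" for a'' b''
  proof -
    define a' where "a' = (\<chi> i. max (a''$i) (c$i))"
    define b' where "b' = (\<chi> i. min (b''$i) (d$i))"
    have ind: "indicator (box a'' b'') x * indicator (box c d) x = (indicator (box a' b') x :: real)" for x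
      by (auto simp: indicator_def mem_box_cart a'_def b'_def)
    have "(\<integral>x. H x * indicator (box a'' b'') x \<partial>lebesgue)
        = (\<integral>x. indicator \<Omega> x *\<^sub>R (g x * indicator (box a' b') x) \<partial>lebesgue)"
      by (intro Bochner_Integration.integral_cong refl) (simp add: H_def G_def ind[symmetric] ac_simps)
    also have "\<dots> = (\<integral>x. g x * indicator (box a' b') x \<partial>lebesgue_on \<Omega>)"
      by (rule integral_restrict_space[symmetric]) (use Omeas in auto)
    also have "\<dots> = 0"
      by (rule sub0) (auto simp: a'_def b'_def)
    finally show ?thesis .
  qed
  have "AE x in lebesgue. H x = 0"
    by (rule ae_zero_of_box_integrals[OF intH boxH])
  then obtain N0 where N0: "{x \<in> space lebesgue. \<not> H x = 0} \<subseteq> N0" "emeasure lebesgue N0 = 0" "N0 \<in> sets lebesgue"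
    by (rule AE_E)
  define N where "N = N0"
  have N: "N \<in> null_sets lebesgue" "{x \<in> space lebesgue. H x \<noteq> 0} \<subseteq> N"
    using N0 by (auto simp: N_def null_sets_def)
  have "{x \<in> box c d. g x \<noteq> 0} \<subseteq> N"
  proof
    fix x assume x: "x \<in> {x \<in> box c d. g x \<noteq> 0}"
    then have "x \<in> \<Omega>" using cd ab box_subset_cbox by blast
    then have "H x \<noteq> 0" using x by (simp add: H_def G_def)
    then show "x \<in> N" using N by auto
  qed
  moreover have "negligible N" using N(1) negligible_iff_null_sets by blast
  ultimately show ?thesis using negligible_subset by blast
qed

lemma fund_lemma:
  fixes g :: "real^'n::finite \<Rightarrow> real"
  assumes Om: "open \<Omega>"
    and gm: "g \<in> borel_measurable (lebesgue_on \<Omega>)"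
    and T: "\<And>\<phi>. test_fun \<Omega> \<phi> \<Longrightarrow> integrable (lebesgue_on \<Omega>) (\<lambda>x. g x * \<phi> x) \<and>
               (\<integral>x. g x * \<phi> x \<partial>lebesgue_on \<Omega>) = 0"
  shows "AE x in lebesgue_on \<Omega>. g x = 0"
proof -
  define S where "S = {x \<in> \<Omega>. g x \<noteq> 0}"
  have "negligible S"
  proof (rule locally_negligible_alt[THEN iffD2], intro ballI)
    fix x assume "x \<in> S"
    then have "x \<in> \<Omega>" by (simp add: S_def)
    obtain a b where ab: "cbox a b \<subseteq> \<Omega>" "x \<in> box a b" "\<forall>i\<in>Basis. a \<bullet> i < b \<bullet> i"
      by (rule open_contains_cbox[OF Om \<open>x \<in> \<Omega>\<close>])
    obtain c d where cd: "cbox c d \<subseteq> box a b" "x \<in> box c d" "\<forall>i\<in>Basis. c \<bullet> i < d \<bullet> i"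
      by (rule open_contains_cbox[OF open_box ab(2)])
    show "\<exists>U. openin (top_of_set S) U \<and> x \<in> U \<and> negligible U"
    proof (intro exI conjI)
      show "openin (top_of_set S) (S \<inter> box c d)" by (intro openin_open_Int open_box)
      show "x \<in> S \<inter> box c d" using \<open>x \<in> S\<close> cd by blast
      have "negligible {x \<in> box c d. g x \<noteq> 0}" by (rule fund_local[OF Om gm T ab(1) cd(1)])
      moreover have "S \<inter> box c d \<subseteq> {x \<in> box c d. g x \<noteq> 0}" by (auto simp: S_def)
      ultimately show "negligible (S \<inter> box c d)" by (rule negligible_subset)
    qed
  qed
  then have "S \<in> null_sets lebesgue" by (simp add: negligible_iff_null_sets)
  then have "AE x in lebesgue. x \<notin> S" by (rule AE_not_in)
  then have "AE x in lebesgue. x \<in> \<Omega> \<longrightarrow> g x = 0" by eventually_elim (auto simp: S_def)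
  moreover have "\<Omega> \<inter> space lebesgue \<in> sets lebesgue" using Om by simp
  ultimately show ?thesis by (simp add: AE_restrict_space_iff)
qed

lemma meas_nth:
  fixes f :: "'a \<Rightarrow> 'b::real_normed_vector^'n::finite"
  shows "f \<in> borel_measurable M \<Longrightarrow> (\<lambda>x. f x $ i) \<in> borel_measurable M"
  by (erule measurable_compose[OF _ borel_measurable_continuous_onI])
     (intro linear_continuous_on bounded_linear_vec_nth)

lemma weak_deriv_unique:
  assumes Om: "open \<Omega>" and g1: "weak_deriv \<Omega> is u g1" and g2: "weak_deriv \<Omega> is u g2"
  shows "AE x in lebesgue_on \<Omega>. g1 x = g2 x"
proof -
  have "AE x in lebesgue_on \<Omega>. g1 x - g2 x = 0"
  proof (rule fund_lemma[OF Om])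
    show "(\<lambda>x. g1 x - g2 x) \<in> borel_measurable (lebesgue_on \<Omega>)"
      using g1 g2 unfolding weak_deriv_def by auto
    fix \<phi> assume t: "test_fun \<Omega> \<phi>"
    have i1: "integrable (lebesgue_on \<Omega>) (\<lambda>x. g1 x * \<phi> x)"
      and e1: "(\<integral>x. u x * partial_list is \<phi> x \<partial>lebesgue_on \<Omega>) = (-1) ^ length is * (\<integral>x. g1 x * \<phi> x \<partial>lebesgue_on \<Omega>)"
      using g1 t unfolding weak_deriv_def by blast+
    have i2: "integrable (lebesgue_on \<Omega>) (\<lambda>x. g2 x * \<phi> x)"
      and e2: "(\<integral>x. u x * partial_list is \<phi> x \<partial>lebesgue_on \<Omega>) = (-1) ^ length is * (\<integral>x. g2 x * \<phi> x \<partial>lebesgue_on \<Omega>)"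
      using g2 t unfolding weak_deriv_def by blast+
    have eq: "(\<lambda>x. (g1 x - g2 x) * \<phi> x) = (\<lambda>x. g1 x * \<phi> x - g2 x * \<phi> x)"
      by (auto simp: algebra_simps)
    show "integrable (lebesgue_on \<Omega>) (\<lambda>x. (g1 x - g2 x) * \<phi> x) \<and> (\<integral>x. (g1 x - g2 x) * \<phi> x \<partial>lebesgue_on \<Omega>) = 0"
      unfolding eq using i1 i2 e1 e2 by (simp add: Bochner_Integration.integral_diff)
  qed
  then show ?thesis by eventually_elim simp
qed

lemma weak_deriv_lin:
  assumes gu: "weak_deriv \<Omega> is u gu" and gw: "weak_deriv \<Omega> is w gw"
  shows "weak_deriv \<Omega> is (\<lambda>x. u x + t * w x) (\<lambda>x. gu x + t * gw x)"
  unfolding weak_deriv_def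
proof (intro conjI allI impI)
  show "(\<lambda>x. u x + t * w x) \<in> borel_measurable (lebesgue_on \<Omega>)"
    "(\<lambda>x. gu x + t * gw x) \<in> borel_measurable (lebesgue_on \<Omega>)"
    using gu gw unfolding weak_deriv_def by auto
  fix \<phi> assume tf: "test_fun \<Omega> \<phi>"
  note U = gu[unfolded weak_deriv_def, THEN conjunct2, THEN conjunct2, rule_format, OF tf]
  note W = gw[unfolded weak_deriv_def, THEN conjunct2, THEN conjunct2, rule_format, OF tf]
  have e1: "(\<lambda>x. (u x + t * w x) * partial_list is \<phi> x) = (\<lambda>x. u x * partial_list is \<phi> x + t * (w x * partial_list is \<phi> x))"
    by (auto simp: algebra_simps)
  have e2: "(\<lambda>x. (gu x + t * gw x) * \<phi> x) = (\<lambda>x. gu x * \<phi> x + t * (gw x * \<phi> x))"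
    by (auto simp: algebra_simps)
  show "integrable (lebesgue_on \<Omega>) (\<lambda>x. (u x + t * w x) * partial_list is \<phi> x)"
    unfolding e1 using U W by auto
  show "integrable (lebesgue_on \<Omega>) (\<lambda>x. (gu x + t * gw x) * \<phi> x)"
    unfolding e2 using U W by auto
  show "(\<integral>x. (u x + t * w x) * partial_list is \<phi> x \<partial>lebesgue_on \<Omega>) =
        (- 1) ^ length is * (\<integral>x. (gu x + t * gw x) * \<phi> x \<partial>lebesgue_on \<Omega>)"
    unfolding e1 e2 using U W by (simp add: algebra_simps)
qed

lemma weak_deriv_zero: "weak_deriv \<Omega> is (\<lambda>x. 0) (\<lambda>x. 0)"
  unfolding weak_deriv_def by auto


lemma sn_eq:
  assumes "\<Omega> \<in> sets lebesgue"
  shows "set_nn_integral lebesgue \<Omega> f = (\<integral>\<^sup>+x. f x \<partial>lebesgue_on \<Omega>)"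
  by (rule nn_integral_restrict_space[symmetric]) (use assms in simp)

lemma L2_integrable:
  assumes Om: "\<Omega> \<in> sets lebesgue" and L: "L2 \<Omega> g"
  shows "integrable (lebesgue_on \<Omega>) (\<lambda>x. (g x)\<^sup>2)"
  unfolding integrable_iff_bounded
proof
  show "(\<lambda>x. (g x)\<^sup>2) \<in> borel_measurable (lebesgue_on \<Omega>)" using L unfolding L2_def by auto
  have "(\<integral>\<^sup>+x. ennreal (norm ((g x)\<^sup>2)) \<partial>lebesgue_on \<Omega>) = set_nn_integral lebesgue \<Omega> (\<lambda>x. ennreal ((g x)\<^sup>2))"
    by (simp add: sn_eq[OF Om])
  then show "(\<integral>\<^sup>+x. ennreal (norm ((g x)\<^sup>2)) \<partial>lebesgue_on \<Omega>) < \<infinity>" using L unfolding L2_def by simp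
qed

lemma integrable_prod_L2:
  fixes f g :: "'a \<Rightarrow> real"
  assumes "f \<in> borel_measurable M" "g \<in> borel_measurable M"
    and "integrable M (\<lambda>x. (f x)\<^sup>2)" "integrable M (\<lambda>x. (g x)\<^sup>2)"
  shows "integrable M (\<lambda>x. f x * g x)"
proof (rule Bochner_Integration.integrable_bound[where f="\<lambda>x. (f x)\<^sup>2 + (g x)\<^sup>2"])
  show "integrable M (\<lambda>x. (f x)\<^sup>2 + (g x)\<^sup>2)" using assms by auto
  show "(\<lambda>x. f x * g x) \<in> borel_measurable M" using assms by auto
  show "AE x in M. norm (f x * g x) \<le> norm ((f x)\<^sup>2 + (g x)\<^sup>2)"
  proof (rule AE_I2)
    fix x
    have "0 \<le> (\<bar>f x\<bar> - \<bar>g x\<bar>)\<^sup>2" by simp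
    then have "2 * \<bar>f x\<bar> * \<bar>g x\<bar> \<le> (f x)\<^sup>2 + (g x)\<^sup>2" by (simp add: power2_eq_square algebra_simps)
    moreover have "0 \<le> \<bar>f x\<bar> * \<bar>g x\<bar>" by simp
    ultimately have "\<bar>f x\<bar> * \<bar>g x\<bar> \<le> (f x)\<^sup>2 + (g x)\<^sup>2" by linarith
    then show "norm (f x * g x) \<le> norm ((f x)\<^sup>2 + (g x)\<^sup>2)"
      by (simp add: abs_mult)
  qed
qed

definition gcomp :: "(real^'n::finite) set \<Rightarrow> (real^'n \<Rightarrow> real) \<Rightarrow> 'n \<Rightarrow> real^'n \<Rightarrow> real" where
  "gcomp \<Omega> v i x = weak_grad \<Omega> v x $ i"

lemma gcomp_eq: "gcomp \<Omega> v i = (SOME g. weak_deriv \<Omega> [i] v g)"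
  by (auto simp: gcomp_def weak_grad_def)

lemma H1_gcomp:
  assumes Om: "open \<Omega>" and v: "v \<in> H1 \<Omega>"
  shows "weak_deriv \<Omega> [i] v (gcomp \<Omega> v i)"
    and "gcomp \<Omega> v i \<in> borel_measurable (lebesgue_on \<Omega>)"
    and "integrable (lebesgue_on \<Omega>) (\<lambda>x. (gcomp \<Omega> v i x)\<^sup>2)"
proof -
  obtain g where g: "weak_deriv \<Omega> [i] v g" "L2 \<Omega> g" using v unfolding H1_def by blast
  show wd: "weak_deriv \<Omega> [i] v (gcomp \<Omega> v i)"
    unfolding gcomp_eq by (rule someI[where P="weak_deriv \<Omega> [i] v", OF g(1)])
  then show m: "gcomp \<Omega> v i \<in> borel_measurable (lebesgue_on \<Omega>)" unfolding weak_deriv_def by blast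
  have ae: "AE x in lebesgue_on \<Omega>. g x = gcomp \<Omega> v i x" by (rule weak_deriv_unique[OF Om g(1) wd])
  have "integrable (lebesgue_on \<Omega>) (\<lambda>x. (g x)\<^sup>2)" using Om g(2) by (intro L2_integrable) auto
  moreover have "AE x in lebesgue_on \<Omega>. (g x)\<^sup>2 = (gcomp \<Omega> v i x)\<^sup>2" using ae by eventually_elim simp
  moreover have "g \<in> borel_measurable (lebesgue_on \<Omega>)" using g(2) unfolding L2_def by blast
  then have "(\<lambda>x. (g x)\<^sup>2) \<in> borel_measurable (lebesgue_on \<Omega>)" by measurable
  moreover have "(\<lambda>x. (gcomp \<Omega> v i x)\<^sup>2) \<in> borel_measurable (lebesgue_on \<Omega>)"
    using m by measurable
  ultimately show "integrable (lebesgue_on \<Omega>) (\<lambda>x. (gcomp \<Omega> v i x)\<^sup>2)"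
    using integrable_cong_AE by blast
qed

lemma H1_L2:
  assumes Om: "open \<Omega>" and v: "v \<in> H1 \<Omega>"
  shows "v \<in> borel_measurable (lebesgue_on \<Omega>)" "integrable (lebesgue_on \<Omega>) (\<lambda>x. (v x)\<^sup>2)"
proof -
  have L: "L2 \<Omega> v" using v unfolding H1_def by blast
  then show "v \<in> borel_measurable (lebesgue_on \<Omega>)" unfolding L2_def by blast
  show "integrable (lebesgue_on \<Omega>) (\<lambda>x. (v x)\<^sup>2)" using L Om by (intro L2_integrable) auto
qed

lemma gcomp_lin:
  assumes Om: "open \<Omega>" and v: "v \<in> H1 \<Omega>" and w: "w \<in> H1 \<Omega>"
  shows "AE x in lebesgue_on \<Omega>. gcomp \<Omega> (\<lambda>x. v x + t * w x) i x = gcomp \<Omega> v i x + t * gcomp \<Omega> w i x"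
proof -
  have d: "weak_deriv \<Omega> [i] (\<lambda>x. v x + t * w x) (\<lambda>x. gcomp \<Omega> v i x + t * gcomp \<Omega> w i x)"
    by (rule weak_deriv_lin[OF H1_gcomp(1)[OF Om v] H1_gcomp(1)[OF Om w]])
  have s: "weak_deriv \<Omega> [i] (\<lambda>x. v x + t * w x) (gcomp \<Omega> (\<lambda>x. v x + t * w x) i)"
    unfolding gcomp_eq by (rule someI[where P="weak_deriv \<Omega> [i] (\<lambda>x. v x + t * w x)", OF d])
  show ?thesis by (rule weak_deriv_unique[OF Om s d])
qed

lemma gcomp_zero:
  assumes Om: "open \<Omega>"
  shows "AE x in lebesgue_on \<Omega>. gcomp \<Omega> (\<lambda>x. 0) i x = 0"
proof -
  have s: "weak_deriv \<Omega> [i] (\<lambda>x. 0) (gcomp \<Omega> (\<lambda>x. 0) i)"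
    unfolding gcomp_eq by (rule someI[where P="weak_deriv \<Omega> [i] (\<lambda>x. 0)", OF weak_deriv_zero])
  show ?thesis by (rule weak_deriv_unique[OF Om s weak_deriv_zero])
qed

lemma norm2_vec: "(norm (x :: real^'n::finite))\<^sup>2 = (\<Sum>i\<in>UNIV. (x$i)\<^sup>2)"
proof -
  have "(norm x)\<^sup>2 = x \<bullet> x" by (simp add: dot_square_norm)
  also have "\<dots> = (\<Sum>i\<in>UNIV. (x$i)\<^sup>2)" by (simp add: inner_vec_def power2_eq_square)
  finally show ?thesis .
qed

lemma norm2_grad: "(norm (weak_grad \<Omega> v x))\<^sup>2 = (\<Sum>i\<in>UNIV. (gcomp \<Omega> v i x)\<^sup>2)"
  by (simp add: norm2_vec gcomp_def)

lemma norm2_grad_diff: "(norm (weak_grad \<Omega> v x - weak_grad \<Omega> w x))\<^sup>2 = (\<Sum>i\<in>UNIV. (gcomp \<Omega> v i x - gcomp \<Omega> w i x)\<^sup>2)"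
  by (simp add: norm2_vec gcomp_def)

lemma quad_min:
  fixes c1 c2 :: real
  assumes "\<And>t. 0 \<le> t * c1 + t\<^sup>2 * c2"
  shows "c1 = 0"
proof (rule ccontr)
  assume c1: "c1 \<noteq> 0"
  define s where "s = 1 / (\<bar>c2\<bar> + 1)"
  have s: "0 < s" "s * c2 < 1"
    unfolding s_def by (auto simp: field_simps)
  have "0 \<le> (- s * c1) * c1 + (- s * c1)\<^sup>2 * c2" by (rule assms)
  also have "\<dots> = s * c1\<^sup>2 * (s * c2 - 1)" by (simp add: power2_eq_square algebra_simps)
  also have "\<dots> < 0" using s c1 by (intro mult_pos_neg) auto
  finally show False by simp
qed

lemma gcomp_ae:
  assumes Om: "open \<Omega>" and d: "weak_deriv \<Omega> [i] v g"
  shows "AE x in lebesgue_on \<Omega>. gcomp \<Omega> v i x = g x"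
proof -
  have s: "weak_deriv \<Omega> [i] v (gcomp \<Omega> v i)"
    unfolding gcomp_eq by (rule someI[where P="weak_deriv \<Omega> [i] v", OF d])
  show ?thesis by (rule weak_deriv_unique[OF Om s d])
qed

lemma int_bounded_mult:
  fixes a h :: "'a \<Rightarrow> real"
  assumes "a \<in> borel_measurable M" "\<And>x. x \<in> space M \<Longrightarrow> \<bar>a x\<bar> \<le> K" "integrable M h"
  shows "integrable M (\<lambda>x. a x * h x)"
proof (rule Bochner_Integration.integrable_bound[where f="\<lambda>x. K * h x"])
  show "integrable M (\<lambda>x. K * h x)" using assms by auto
  show "(\<lambda>x. a x * h x) \<in> borel_measurable M" using assms by auto
  show "AE x in M. norm (a x * h x) \<le> norm (K * h x)"
  proof (rule AE_I2)
    fix x assume "x \<in> space M"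
    then have "\<bar>a x\<bar> \<le> K" using assms by auto
    then have "\<bar>a x\<bar> * \<bar>h x\<bar> \<le> K * \<bar>h x\<bar>" by (intro mult_right_mono) auto
    also have "\<dots> \<le> \<bar>K\<bar> * \<bar>h x\<bar>" by (intro mult_right_mono) auto
    finally show "norm (a x * h x) \<le> norm (K * h x)" by (simp add: abs_mult)
  qed
qed

lemma matvec_inner: "(A *v y) \<bullet> z = (\<Sum>i\<in>UNIV. \<Sum>j\<in>UNIV. A$i$j * y$j * z$i)"
  for A :: "real^'n::finite^'n"
  by (simp add: inner_vec_def matrix_vector_mult_def sum_distrib_right)


lemma integrand_meas:
  fixes A :: "real^'n::finite \<Rightarrow> real^'n^'n"
  assumes Om: "open \<Omega>" and v: "v \<in> H1 \<Omega>" and Am: "A \<in> borel_measurable (lebesgue_on \<Omega>)"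
  shows "(\<lambda>x. (A x *v weak_grad \<Omega> v x) \<bullet> weak_grad \<Omega> v x) \<in> borel_measurable (lebesgue_on \<Omega>)"
proof -
  have e: "(\<lambda>x. (A x *v weak_grad \<Omega> v x) \<bullet> weak_grad \<Omega> v x)
      = (\<lambda>x. \<Sum>i\<in>UNIV. \<Sum>j\<in>UNIV. A x$i$j * gcomp \<Omega> v j x * gcomp \<Omega> v i x)"
    by (simp add: matvec_inner gcomp_def)
  have am: "(\<lambda>x. A x$i$j) \<in> borel_measurable (lebesgue_on \<Omega>)" for i j
    by (intro meas_nth Am)
  have gm: "gcomp \<Omega> v i \<in> borel_measurable (lebesgue_on \<Omega>)" for i
    by (rule H1_gcomp(2)[OF Om v])
  show ?thesis unfolding e
    by (intro borel_measurable_sum borel_measurable_times am gm)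
qed

lemma case1_bound:
  fixes A :: "real^'n::finite \<Rightarrow> real^'n^'n" and f uh v\<theta> :: "real^'n \<Rightarrow> real"
    and E :: "(real^'n \<Rightarrow> real) \<Rightarrow> real" and W :: "(real^'n \<Rightarrow> real) set"
  assumes Om: "open \<Omega>" and alpha: "0 < \<alpha>"
    and fL2: "L2 \<Omega> f" and Am: "A \<in> borel_measurable (lebesgue_on \<Omega>)" and Ab: "bounded (A ` \<Omega>)"
    and coer: "\<forall>x\<in>\<Omega>. \<forall>\<xi>. \<alpha> * (norm \<xi>)\<^sup>2 \<le> \<xi> \<bullet> (A x *v \<xi>)"
    and Edef: "\<forall>v\<in>W. E v = 1/2 * (\<integral>x. (A x *v weak_grad \<Omega> v x) \<bullet> weak_grad \<Omega> v x \<partial>lebesgue_on \<Omega>)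
              - (\<integral>x. f x * v x \<partial>lebesgue_on \<Omega>)"
    and WH: "W \<subseteq> H1 \<Omega>" and uh: "uh \<in> W" and vt: "v\<theta> \<in> W"
    and lin: "\<And>t. (\<lambda>x. uh x + t * (v\<theta> x - uh x)) \<in> W"
    and min: "\<And>v. v \<in> W \<Longrightarrow> E uh \<le> E v"
  shows "grad_dist2 \<Omega> uh v\<theta> \<le> ennreal ((2/\<alpha>) * (E v\<theta> - E uh))"
proof -
  let ?M = "lebesgue_on \<Omega>"
  have Omeas: "\<Omega> \<in> sets lebesgue" using Om by simp
  have spM: "space ?M = \<Omega>" by simp
  have uH: "uh \<in> H1 \<Omega>" and vH: "v\<theta> \<in> H1 \<Omega>" using WH uh vt by auto
  define Y where "Y i = gcomp \<Omega> uh i" for i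
  define Gt where "Gt i = gcomp \<Omega> v\<theta> i" for i
  define Z where "Z i x = Gt i x - Y i x" for i x
  define a where "a i j x = A x $ i $ j" for i j x
  obtain K where K: "\<forall>x\<in>\<Omega>. norm (A x) \<le> K" using Ab unfolding bounded_iff by auto
  have aK: "x \<in> space ?M \<Longrightarrow> \<bar>a i j x\<bar> \<le> K" for i j x
  proof -
    assume "x \<in> space ?M"
    then have "norm (A x) \<le> K" using K by simp
    moreover have "\<bar>A x$i$j\<bar> \<le> norm (A x $ i)" by (rule component_le_norm_cart)
    moreover have "norm (A x $ i) \<le> norm (A x)" by (rule Finite_Cartesian_Product.norm_nth_le)
    ultimately show ?thesis by (simp add: a_def)
  qed
  have am: "a i j \<in> borel_measurable ?M" for i j
    unfolding a_def[abs_def] by (intro meas_nth Am)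
  define L2f where "L2f (h :: real^'n \<Rightarrow> real) \<longleftrightarrow> h \<in> borel_measurable ?M \<and> integrable ?M (\<lambda>x. (h x)\<^sup>2)" for h
  have LY: "L2f (Y i)" for i unfolding L2f_def Y_def using H1_gcomp[OF Om uH] by blast
  have LG: "L2f (Gt i)" for i unfolding L2f_def Gt_def using H1_gcomp[OF Om vH] by blast
  have LZ: "L2f (Z i)" for i
  proof -
    have "Y i \<in> borel_measurable ?M" "Gt i \<in> borel_measurable ?M" using LY LG unfolding L2f_def by auto
    then have m: "Z i \<in> borel_measurable ?M" unfolding Z_def[abs_def] by (rule borel_measurable_diff[rotated])
    have "integrable ?M (\<lambda>x. (Gt i x)\<^sup>2 - 2 * (Gt i x * Y i x) + (Y i x)\<^sup>2)"
      using LY LG integrable_prod_L2[of "Gt i" ?M "Y i"] unfolding L2f_def by auto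
    moreover have "(\<lambda>x. (Gt i x)\<^sup>2 - 2 * (Gt i x * Y i x) + (Y i x)\<^sup>2) = (\<lambda>x. (Z i x)\<^sup>2)"
      by (auto simp: Z_def power2_eq_square algebra_simps)
    ultimately show ?thesis using m unfolding L2f_def by simp
  qed
  have Lprod: "L2f p \<Longrightarrow> L2f q \<Longrightarrow> integrable ?M (\<lambda>x. p x * q x)" for p q
    unfolding L2f_def by (intro integrable_prod_L2) auto
  have Laqq: "L2f p \<Longrightarrow> L2f q \<Longrightarrow> integrable ?M (\<lambda>x. a i j x * (p x * q x))" for p q i j
    by (rule int_bounded_mult[OF am aK Lprod])
  define P0 where "P0 x = (\<Sum>i\<in>UNIV. \<Sum>j\<in>UNIV. a i j x * (Y j x * Y i x))" for x
  define P1 where "P1 x = (\<Sum>i\<in>UNIV. \<Sum>j\<in>UNIV. a i j x * (Z j x * Y i x) + a i j x * (Y j x * Z i x))" for x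
  define P2 where "P2 x = (\<Sum>i\<in>UNIV. \<Sum>j\<in>UNIV. a i j x * (Z j x * Z i x))" for x
  have iP0: "integrable ?M P0" unfolding P0_def[abs_def]
    by (intro Bochner_Integration.integrable_sum Laqq LY)
  have iP1: "integrable ?M P1" unfolding P1_def[abs_def]
    by (intro Bochner_Integration.integrable_sum Bochner_Integration.integrable_add Laqq LY LZ)
  have iP2: "integrable ?M P2" unfolding P2_def[abs_def]
    by (intro Bochner_Integration.integrable_sum Laqq LZ)
  have fm: "f \<in> borel_measurable ?M" and f2: "integrable ?M (\<lambda>x. (f x)\<^sup>2)"
    using fL2 L2_integrable[OF Omeas fL2] unfolding L2_def by auto
  have Lf: "L2f f" unfolding L2f_def using fm f2 by simp
  have Lu: "L2f uh" and Lv: "L2f v\<theta>" unfolding L2f_def using H1_L2[OF Om uH] H1_L2[OF Om vH] by auto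
  have ifu: "integrable ?M (\<lambda>x. f x * uh x)" and ifv: "integrable ?M (\<lambda>x. f x * v\<theta> x)"
    using Lprod Lf Lu Lv by auto
  define FU where "FU = (\<integral>x. f x * uh x \<partial>?M)"
  define FV where "FV = (\<integral>x. f x * v\<theta> x \<partial>?M)"
  have EU: "E uh = 1/2 * integral\<^sup>L ?M P0 - FU"
  proof -
    have "(\<lambda>x. (A x *v weak_grad \<Omega> uh x) \<bullet> weak_grad \<Omega> uh x) = P0"
      by (auto simp: matvec_inner P0_def a_def Y_def gcomp_def mult.assoc)
    then show ?thesis using Edef uh by (simp add: FU_def)
  qed
  define vt where "vt t = (\<lambda>x. uh x + t * (v\<theta> x - uh x))" for t
  have dZ: "weak_deriv \<Omega> [i] (\<lambda>x. v\<theta> x - uh x) (Z i)" for i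
  proof -
    have "weak_deriv \<Omega> [i] (\<lambda>x. v\<theta> x + (-1) * uh x) (\<lambda>x. Gt i x + (-1) * Y i x)"
      unfolding Gt_def Y_def by (rule weak_deriv_lin[OF H1_gcomp(1)[OF Om vH] H1_gcomp(1)[OF Om uH]])
    moreover have "(\<lambda>x. v\<theta> x + (-1) * uh x) = (\<lambda>x. v\<theta> x - uh x)" "(\<lambda>x. Gt i x + (-1) * Y i x) = Z i"
      by (auto simp: Z_def)
    ultimately show ?thesis by simp
  qed
  have dvt: "weak_deriv \<Omega> [i] (vt t) (\<lambda>x. Y i x + t * Z i x)" for i t
    unfolding vt_def Y_def by (rule weak_deriv_lin[OF H1_gcomp(1)[OF Om uH] dZ])
  have Evt: "E (vt t) = E uh + t * (1/2 * integral\<^sup>L ?M P1 - (FV - FU)) + t\<^sup>2 * (1/2 * integral\<^sup>L ?M P2)" for t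
  proof -
    have vtW: "vt t \<in> W" unfolding vt_def by (rule lin)
    then have vtH: "vt t \<in> H1 \<Omega>" using WH by auto
    have ae: "AE x in ?M. \<forall>i\<in>UNIV. gcomp \<Omega> (vt t) i x = Y i x + t * Z i x"
      by (intro AE_finite_allI gcomp_ae[OF Om dvt]) simp
    have "AE x in ?M. (A x *v weak_grad \<Omega> (vt t) x) \<bullet> weak_grad \<Omega> (vt t) x = P0 x + t * P1 x + t\<^sup>2 * P2 x"
      using ae
    proof eventually_elim
      case (elim x)
      have "(A x *v weak_grad \<Omega> (vt t) x) \<bullet> weak_grad \<Omega> (vt t) x
          = (\<Sum>i\<in>UNIV. \<Sum>j\<in>UNIV. a i j x * (Y j x + t * Z j x) * (Y i x + t * Z i x))"
        using elim by (simp add: matvec_inner a_def gcomp_def[symmetric])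
      also have "\<dots> = (\<Sum>i\<in>UNIV. \<Sum>j\<in>UNIV. a i j x * (Y j x * Y i x)
            + t * (a i j x * (Z j x * Y i x) + a i j x * (Y j x * Z i x))
            + t\<^sup>2 * (a i j x * (Z j x * Z i x)))"
        by (intro sum.cong refl) (simp add: power2_eq_square algebra_simps)
      also have "\<dots> = P0 x + t * P1 x + t\<^sup>2 * P2 x"
        by (simp add: P0_def P1_def P2_def sum.distrib sum_distrib_left distrib_left)
      finally show ?case .
    qed
    then have I1: "(\<integral>x. (A x *v weak_grad \<Omega> (vt t) x) \<bullet> weak_grad \<Omega> (vt t) x \<partial>?M)
        = (\<integral>x. P0 x + t * P1 x + t\<^sup>2 * P2 x \<partial>?M)"
      by (intro integral_cong_AE integrand_meas[OF Om vtH Am])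
         (use iP0 iP1 iP2 in auto)
    also have "\<dots> = integral\<^sup>L ?M P0 + t * integral\<^sup>L ?M P1 + t\<^sup>2 * integral\<^sup>L ?M P2"
      using iP0 iP1 iP2 by simp
    finally have I1': "(\<integral>x. (A x *v weak_grad \<Omega> (vt t) x) \<bullet> weak_grad \<Omega> (vt t) x \<partial>?M)
        = integral\<^sup>L ?M P0 + t * integral\<^sup>L ?M P1 + t\<^sup>2 * integral\<^sup>L ?M P2" .
    have "(\<lambda>x. f x * vt t x) = (\<lambda>x. f x * uh x + t * (f x * v\<theta> x - f x * uh x))"
      by (auto simp: vt_def algebra_simps)
    then have I2: "(\<integral>x. f x * vt t x \<partial>?M) = FU + t * (FV - FU)"
      using ifu ifv by (simp add: FU_def FV_def)
    have "E (vt t) = 1/2 * (\<integral>x. (A x *v weak_grad \<Omega> (vt t) x) \<bullet> weak_grad \<Omega> (vt t) x \<partial>?M)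
              - (\<integral>x. f x * vt t x \<partial>?M)" using Edef vtW by blast
    also have "\<dots> = 1/2 * (integral\<^sup>L ?M P0 + t * integral\<^sup>L ?M P1 + t\<^sup>2 * integral\<^sup>L ?M P2) - (FU + t * (FV - FU))"
      unfolding I1' I2 ..
    finally show ?thesis unfolding EU by (simp add: algebra_simps)
  qed
  have "0 \<le> t * (1/2 * integral\<^sup>L ?M P1 - (FV - FU)) + t\<^sup>2 * (1/2 * integral\<^sup>L ?M P2)" for t
  proof -
    have "E uh \<le> E (vt t)" unfolding vt_def by (rule min[OF lin])
    then show ?thesis unfolding Evt by linarith
  qed
  then have c1: "1/2 * integral\<^sup>L ?M P1 - (FV - FU) = 0" by (rule quad_min)
  have "vt 1 = v\<theta>" by (auto simp: vt_def)
  then have EV: "E v\<theta> - E uh = 1/2 * integral\<^sup>L ?M P2" using Evt[of 1] c1 by (simp only:) simp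
  define S where "S x = (\<Sum>i\<in>UNIV. (Z i x)\<^sup>2)" for x
  have iS: "integrable ?M S" unfolding S_def[abs_def]
    using LZ unfolding L2f_def by (intro Bochner_Integration.integrable_sum) auto
  have SP: "\<alpha> * S x \<le> P2 x" if "x \<in> space ?M" for x
  proof -
    define \<xi> where "\<xi> = (\<chi> i. Z i x)"
    have "\<alpha> * (norm \<xi>)\<^sup>2 \<le> \<xi> \<bullet> (A x *v \<xi>)" using coer that by simp
    moreover have "(norm \<xi>)\<^sup>2 = S x" by (simp add: norm2_vec S_def \<xi>_def)
    moreover have "\<xi> \<bullet> (A x *v \<xi>) = P2 x"
    proof -
      have "\<xi> \<bullet> (A x *v \<xi>) = (A x *v \<xi>) \<bullet> \<xi>" by (rule inner_commute)
      also have "\<dots> = P2 x" unfolding matvec_inner by (simp add: P2_def a_def \<xi>_def mult.assoc)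
      finally show ?thesis .
    qed
    ultimately show ?thesis by simp
  qed
  have "\<alpha> * integral\<^sup>L ?M S \<le> integral\<^sup>L ?M P2"
  proof -
    have "integral\<^sup>L ?M (\<lambda>x. \<alpha> * S x) \<le> integral\<^sup>L ?M P2"
      by (intro integral_mono iP2 SP) (use iS in auto)
    then show ?thesis by simp
  qed
  then have Sle: "integral\<^sup>L ?M S \<le> (2/\<alpha>) * (E v\<theta> - E uh)"
    using alpha EV by (simp add: field_simps)
  have "grad_dist2 \<Omega> uh v\<theta> = (\<integral>\<^sup>+x. ennreal ((norm (weak_grad \<Omega> uh x - weak_grad \<Omega> v\<theta> x))\<^sup>2) \<partial>?M)"
    unfolding grad_dist2_def by (rule sn_eq[OF Omeas])
  also have "\<dots> = (\<integral>\<^sup>+x. ennreal (S x) \<partial>?M)"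
    by (intro nn_integral_cong) (simp add: norm2_grad_diff S_def Z_def Y_def Gt_def power2_commute)
  also have "\<dots> = ennreal (integral\<^sup>L ?M S)"
    by (rule nn_integral_eq_integral[OF iS]) (simp add: S_def sum_nonneg)
  also have "\<dots> \<le> ennreal ((2/\<alpha>) * (E v\<theta> - E uh))"
    using Sle by (rule ennreal_leI)
  finally show ?thesis .
qed


lemma comp_pair_meas:
  fixes a :: "real^'n::finite \<Rightarrow> real \<Rightarrow> real"
  assumes am: "(\<lambda>(x, s). a x s) \<in> borel_measurable borel"
    and v: "v \<in> borel_measurable (lebesgue_on \<Omega>)"
  shows "(\<lambda>x. a x (v x)) \<in> borel_measurable (lebesgue_on \<Omega>)"
proof -
  have id: "(\<lambda>x. x) \<in> lebesgue_on \<Omega> \<rightarrow>\<^sub>M (borel :: (real^'n) measure)"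
  proof -
    have "(\<lambda>x. x) \<in> lborel \<rightarrow>\<^sub>M (borel :: (real^'n) measure)" by (rule measurable_ident_sets) simp
    then have "(\<lambda>x. x) \<in> lebesgue \<rightarrow>\<^sub>M (borel :: (real^'n) measure)" by (rule measurable_completion)
    then show ?thesis by (rule measurable_restrict_space1)
  qed
  have p: "(\<lambda>x. (x, v x)) \<in> lebesgue_on \<Omega> \<rightarrow>\<^sub>M (borel \<Otimes>\<^sub>M borel)"
    by (rule measurable_Pair[OF id v])
  have "(\<lambda>(x, s). a x s) \<in> borel_measurable (borel \<Otimes>\<^sub>M borel)"
    using am by (simp add: borel_prod)
  from measurable_compose[OF p this] show ?thesis by simp
qed

lemma H1_N:
  assumes Om: "open \<Omega>" and v: "v \<in> H1 \<Omega>"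
  shows "(\<lambda>x. (norm (weak_grad \<Omega> v x))\<^sup>2) \<in> borel_measurable (lebesgue_on \<Omega>)"
    and "integrable (lebesgue_on \<Omega>) (\<lambda>x. (norm (weak_grad \<Omega> v x))\<^sup>2)"
proof -
  have e: "(\<lambda>x. (norm (weak_grad \<Omega> v x))\<^sup>2) = (\<lambda>x. \<Sum>i\<in>UNIV. (gcomp \<Omega> v i x)\<^sup>2)"
    by (simp add: norm2_grad)
  show "(\<lambda>x. (norm (weak_grad \<Omega> v x))\<^sup>2) \<in> borel_measurable (lebesgue_on \<Omega>)"
    unfolding e using H1_gcomp(2)[OF Om v] by (intro borel_measurable_sum) measurable
  show "integrable (lebesgue_on \<Omega>) (\<lambda>x. (norm (weak_grad \<Omega> v x))\<^sup>2)"
    unfolding e using H1_gcomp(3)[OF Om v] by (intro Bochner_Integration.integrable_sum)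
qed

lemma case2_bound:
  fixes a :: "real^'n::finite \<Rightarrow> real \<Rightarrow> real" and uh v\<theta> :: "real^'n \<Rightarrow> real"
    and E :: "(real^'n \<Rightarrow> real) \<Rightarrow> real" and W :: "(real^'n \<Rightarrow> real) set"
  assumes Om: "open \<Omega>" and alpha: "0 < \<alpha>"
    and am: "(\<lambda>(x, s). a x s) \<in> borel_measurable borel"
    and ab: "\<forall>x\<in>\<Omega>. \<forall>s. \<alpha> \<le> a x s \<and> a x s \<le> \<Lambda>"
    and Edef: "\<forall>v\<in>W. E v = 1/2 * (\<integral>x. a x (v x) * (norm (weak_grad \<Omega> v x))\<^sup>2 \<partial>lebesgue_on \<Omega>)"
    and WH: "W \<subseteq> H1 \<Omega>" and uh: "uh \<in> W" and vt: "v\<theta> \<in> W" and zW: "(\<lambda>x. 0) \<in> W"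
    and min: "\<And>v. v \<in> W \<Longrightarrow> E uh \<le> E v"
  shows "grad_dist2 \<Omega> uh v\<theta> \<le> ennreal ((2/\<alpha>) * (E v\<theta> - E uh))"
proof -
  let ?M = "lebesgue_on \<Omega>"
  have Omeas: "\<Omega> \<in> sets lebesgue" using Om by simp
  define N where "N v x = (norm (weak_grad \<Omega> v x))\<^sup>2" for v x
  have intaN: "integrable ?M (\<lambda>x. a x (v x) * N v x)" if "v \<in> W" for v
  proof -
    have vH: "v \<in> H1 \<Omega>" using that WH by auto
    show ?thesis unfolding N_def
    proof (rule int_bounded_mult[where K=\<Lambda>])
      show "(\<lambda>x. a x (v x)) \<in> borel_measurable ?M" by (rule comp_pair_meas[OF am H1_L2(1)[OF Om vH]])
      show "integrable ?M (\<lambda>x. (norm (weak_grad \<Omega> v x))\<^sup>2)" by (rule H1_N(2)[OF Om vH])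
      fix x assume "x \<in> space ?M"
      then have "\<alpha> \<le> a x (v x)" "a x (v x) \<le> \<Lambda>" using ab by auto
      then show "\<bar>a x (v x)\<bar> \<le> \<Lambda>" using alpha by auto
    qed
  qed
  have E0: "E (\<lambda>x. 0) = 0"
  proof -
    have "AE x in ?M. \<forall>i\<in>UNIV. gcomp \<Omega> (\<lambda>x. 0) i x = 0"
      by (intro AE_finite_allI gcomp_zero[OF Om]) simp
    then have "AE x in ?M. a x 0 * (norm (weak_grad \<Omega> (\<lambda>x. 0) x))\<^sup>2 = 0"
      by eventually_elim (simp add: norm2_grad)
    then have "(\<integral>x. a x 0 * (norm (weak_grad \<Omega> (\<lambda>x. 0) x))\<^sup>2 \<partial>?M) = 0"
      by (rule integral_eq_zero_AE)
    moreover have "E (\<lambda>x. 0) = 1/2 * (\<integral>x. a x ((\<lambda>x. 0) x) * (norm (weak_grad \<Omega> (\<lambda>x. 0) x))\<^sup>2 \<partial>?M)"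
      using Edef zW by blast
    ultimately show ?thesis by simp
  qed
  have nonneg: "0 \<le> a x (v x) * N v x" if "x \<in> space ?M" for x v
  proof -
    have "\<alpha> \<le> a x (v x)" using ab that by auto
    then have "0 \<le> a x (v x)" using alpha by linarith
    then show ?thesis unfolding N_def by simp
  qed
  have EuhI: "E uh = 1/2 * (\<integral>x. a x (uh x) * N uh x \<partial>?M)" using Edef uh by (simp add: N_def)
  have "0 \<le> (\<integral>x. a x (uh x) * N uh x \<partial>?M)"
    by (rule Bochner_Integration.integral_nonneg) (rule nonneg)
  then have Euh_ge: "0 \<le> E uh" unfolding EuhI by simp
  have Euh: "E uh = 0" using min[OF zW] E0 Euh_ge by simp
  then have "(\<integral>x. a x (uh x) * N uh x \<partial>?M) = 0" using EuhI by simp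
  moreover have "AE x in ?M. 0 \<le> a x (uh x) * N uh x" by (rule AE_I2) (rule nonneg)
  ultimately have "AE x in ?M. a x (uh x) * N uh x = 0"
    using integral_nonneg_eq_0_iff_AE[OF intaN[OF uh]] by blast
  then have ae0: "AE x in ?M. weak_grad \<Omega> uh x = 0"
  proof (rule AE_mp[OF _ AE_I2], intro impI)
    fix x assume x: "x \<in> space ?M" and z: "a x (uh x) * N uh x = 0"
    have "0 < a x (uh x)" using ab x alpha by (auto intro: order.strict_trans2)
    then have "N uh x = 0" using z by simp
    then show "weak_grad \<Omega> uh x = 0" by (simp add: N_def)
  qed
  have vH: "v\<theta> \<in> H1 \<Omega>" using WH vt by auto
  have iN: "integrable ?M (N v\<theta>)" unfolding N_def[abs_def] by (rule H1_N(2)[OF Om vH])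
  have "\<alpha> * integral\<^sup>L ?M (N v\<theta>) \<le> (\<integral>x. a x (v\<theta> x) * N v\<theta> x \<partial>?M)"
  proof -
    have "integral\<^sup>L ?M (\<lambda>x. \<alpha> * N v\<theta> x) \<le> (\<integral>x. a x (v\<theta> x) * N v\<theta> x \<partial>?M)"
    proof (rule integral_mono)
      show "integrable ?M (\<lambda>x. \<alpha> * N v\<theta> x)" using iN by simp
      show "integrable ?M (\<lambda>x. a x (v\<theta> x) * N v\<theta> x)" by (rule intaN[OF vt])
      fix x assume "x \<in> space ?M"
      then show "\<alpha> * N v\<theta> x \<le> a x (v\<theta> x) * N v\<theta> x" using ab by (auto simp: N_def intro!: mult_right_mono)
    qed
    then show ?thesis by simp
  qed
  also have "\<dots> = 2 * E v\<theta>"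
  proof -
    have "E v\<theta> = 1/2 * (\<integral>x. a x (v\<theta> x) * N v\<theta> x \<partial>?M)" using Edef vt by (simp add: N_def)
    then show ?thesis by simp
  qed
  finally have Nle: "integral\<^sup>L ?M (N v\<theta>) \<le> (2/\<alpha>) * (E v\<theta> - E uh)"
    using alpha Euh by (simp add: field_simps)
  have "grad_dist2 \<Omega> uh v\<theta> = (\<integral>\<^sup>+x. ennreal ((norm (weak_grad \<Omega> uh x - weak_grad \<Omega> v\<theta> x))\<^sup>2) \<partial>?M)"
    unfolding grad_dist2_def by (rule sn_eq[OF Omeas])
  also have "\<dots> = (\<integral>\<^sup>+x. ennreal (N v\<theta> x) \<partial>?M)"
    by (rule nn_integral_cong_AE) (use ae0 in \<open>eventually_elim, simp add: N_def\<close>)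
  also have "\<dots> = ennreal (integral\<^sup>L ?M (N v\<theta>))"
    by (rule nn_integral_eq_integral[OF iN]) (simp add: N_def)
  also have "\<dots> \<le> ennreal ((2/\<alpha>) * (E v\<theta> - E uh))"
    using Nle by (rule ennreal_leI)
  finally show ?thesis .
qed

lemma poly_deg_lin:
  assumes "poly_deg p q1" "poly_deg p q2"
  shows "poly_deg p (\<lambda>x. q1 x + t * (q2 x - q1 x))"
proof -
  obtain c1 where c1: "q1 = (\<lambda>x. \<Sum>\<alpha>\<in>{\<alpha>. sum \<alpha> UNIV \<le> p}. c1 \<alpha> * (\<Prod>i\<in>UNIV. (x $ i) ^ \<alpha> i))"
    using assms(1) unfolding poly_deg_def by blast
  obtain c2 where c2: "q2 = (\<lambda>x. \<Sum>\<alpha>\<in>{\<alpha>. sum \<alpha> UNIV \<le> p}. c2 \<alpha> * (\<Prod>i\<in>UNIV. (x $ i) ^ \<alpha> i))"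
    using assms(2) unfolding poly_deg_def by blast
  show ?thesis unfolding poly_deg_def
  proof (intro exI[where x="\<lambda>\<alpha>. c1 \<alpha> + t * (c2 \<alpha> - c1 \<alpha>)"] ext)
    fix x :: "real^'a"
    show "q1 x + t * (q2 x - q1 x) = (\<Sum>\<alpha>\<in>{\<alpha>. sum \<alpha> UNIV \<le> p}. (c1 \<alpha> + t * (c2 \<alpha> - c1 \<alpha>)) * (\<Prod>i\<in>UNIV. (x $ i) ^ \<alpha> i))"
      unfolding c1 c2 by (simp add: algebra_simps sum.distrib sum_subtractf sum_distrib_left)
  qed
qed

lemma poly_deg_zero: "poly_deg p (\<lambda>x. 0)"
  unfolding poly_deg_def by (intro exI[where x="\<lambda>\<alpha>. 0"]) simp

lemma lfe_lin:
  assumes V: "lin_subspace V" and u: "u \<in> lagrange_fe \<Omega> T p V" and v: "v \<in> lagrange_fe \<Omega> T p V"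
  shows "(\<lambda>x. u x + t * (v x - u x)) \<in> lagrange_fe \<Omega> T p V"
proof -
  have uV: "u \<in> V" and vV: "v \<in> V" using u v by (auto simp: lagrange_fe_def)
  have add: "\<And>f g. f \<in> V \<Longrightarrow> g \<in> V \<Longrightarrow> (\<lambda>x. f x + g x) \<in> V"
    and smul: "\<And>c f. f \<in> V \<Longrightarrow> (\<lambda>x. c * f x) \<in> V"
    using V unfolding lin_subspace_def by blast+
  have w1: "(\<lambda>x. t * v x) \<in> V" using smul[OF vV] .
  have w2: "(\<lambda>x. (- t) * u x) \<in> V" using smul[OF uV] .
  have w3: "(\<lambda>x. t * v x + (- t) * u x) \<in> V" using add[OF w1 w2] by simp
  have w4: "(\<lambda>x. u x + (t * v x + (- t) * u x)) \<in> V" using add[OF uV w3] by simp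
  have eq: "(\<lambda>x. u x + (t * v x + (- t) * u x)) = (\<lambda>x. u x + t * (v x - u x))"
    by (auto simp: algebra_simps)
  have cu: "continuous_on (closure \<Omega>) u" and cv: "continuous_on (closure \<Omega>) v"
    using u v by (auto simp: lagrange_fe_def)
  show ?thesis unfolding lagrange_fe_def
  proof (intro CollectI conjI ballI)
    show "(\<lambda>x. u x + t * (v x - u x)) \<in> V" using w4 eq by simp
    show "continuous_on (closure \<Omega>) (\<lambda>x. u x + t * (v x - u x))"
      by (intro continuous_intros cu cv)
    fix K assume K: "K \<in> T"
    obtain q1 where q1: "poly_deg p q1" "\<forall>x\<in>K. u x = q1 x" using u K by (auto simp: lagrange_fe_def)
    obtain q2 where q2: "poly_deg p q2" "\<forall>x\<in>K. v x = q2 x" using v K by (auto simp: lagrange_fe_def)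
    show "\<exists>q. poly_deg p q \<and> (\<forall>x\<in>K. u x + t * (v x - u x) = q x)"
      using q1 q2 poly_deg_lin[OF q1(1) q2(1), of t] by auto
  qed
qed

lemma lfe_zero:
  assumes V: "lin_subspace V"
  shows "(\<lambda>x. 0) \<in> lagrange_fe \<Omega> T p V"
  using V poly_deg_zero unfolding lagrange_fe_def lin_subspace_def by auto

lemma grad_dist2_meas:
  assumes Om: "open \<Omega>" and u: "u \<in> H1 \<Omega>" and v: "v \<in> H1 \<Omega>"
  shows "(\<lambda>x. ennreal ((norm (weak_grad \<Omega> u x - weak_grad \<Omega> v x))\<^sup>2)) \<in> borel_measurable (lebesgue_on \<Omega>)"
proof -
  have e: "(\<lambda>x. (norm (weak_grad \<Omega> u x - weak_grad \<Omega> v x))\<^sup>2) = (\<lambda>x. \<Sum>i\<in>UNIV. (gcomp \<Omega> u i x - gcomp \<Omega> v i x)\<^sup>2)"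
    by (simp add: norm2_grad_diff)
  have "(\<lambda>x. (norm (weak_grad \<Omega> u x - weak_grad \<Omega> v x))\<^sup>2) \<in> borel_measurable (lebesgue_on \<Omega>)"
    unfolding e using H1_gcomp(2)[OF Om u] H1_gcomp(2)[OF Om v] by (intro borel_measurable_sum) measurable
  then show ?thesis by measurable
qed

lemma grad_dist2_tri:
  assumes Om: "open \<Omega>" and u: "u \<in> H1 \<Omega>" and v: "v \<in> H1 \<Omega>" and w: "w \<in> H1 \<Omega>"
  shows "grad_dist2 \<Omega> u w \<le> 2 * grad_dist2 \<Omega> u v + 2 * grad_dist2 \<Omega> v w"
proof -
  have Omeas: "\<Omega> \<in> sets lebesgue" using Om by simp
  let ?M = "lebesgue_on \<Omega>"
  let ?d = "\<lambda>u v x. ennreal ((norm (weak_grad \<Omega> u x - weak_grad \<Omega> v x))\<^sup>2)"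
  have pt: "?d u w x \<le> 2 * ?d u v x + 2 * ?d v w x" for x
  proof -
    let ?a = "weak_grad \<Omega> u x" and ?b = "weak_grad \<Omega> v x" and ?c = "weak_grad \<Omega> w x"
    have "?a - ?c = (?a - ?b) + (?b - ?c)" by simp
    then have "norm (?a - ?c) \<le> norm (?a - ?b) + norm (?b - ?c)" by (metis norm_triangle_ineq)
    then have "(norm (?a - ?c))\<^sup>2 \<le> (norm (?a - ?b) + norm (?b - ?c))\<^sup>2"
      by (intro power_mono) auto
    also have "\<dots> \<le> 2 * (norm (?a - ?b))\<^sup>2 + 2 * (norm (?b - ?c))\<^sup>2"
    proof -
      have "2 * (norm (?a - ?b))\<^sup>2 + 2 * (norm (?b - ?c))\<^sup>2 - (norm (?a - ?b) + norm (?b - ?c))\<^sup>2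
          = (norm (?a - ?b) - norm (?b - ?c))\<^sup>2" by (simp add: power2_eq_square algebra_simps)
      moreover have "0 \<le> (norm (?a - ?b) - norm (?b - ?c))\<^sup>2" by simp
      ultimately show ?thesis by linarith
    qed
    finally have "ennreal ((norm (?a - ?c))\<^sup>2) \<le> ennreal (2 * (norm (?a - ?b))\<^sup>2 + 2 * (norm (?b - ?c))\<^sup>2)"
      by (rule ennreal_leI)
    also have "\<dots> = ennreal (2 * (norm (?a - ?b))\<^sup>2) + ennreal (2 * (norm (?b - ?c))\<^sup>2)"
      by (rule ennreal_plus) auto
    also have "\<dots> = 2 * ?d u v x + 2 * ?d v w x"
      by (simp add: ennreal_mult)
    finally show ?thesis .
  qed
  have "grad_dist2 \<Omega> u w = (\<integral>\<^sup>+x. ?d u w x \<partial>?M)" unfolding grad_dist2_def by (rule sn_eq[OF Omeas])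
  also have "\<dots> \<le> (\<integral>\<^sup>+x. 2 * ?d u v x + 2 * ?d v w x \<partial>?M)" by (intro nn_integral_mono pt)
  also have "\<dots> = 2 * (\<integral>\<^sup>+x. ?d u v x \<partial>?M) + 2 * (\<integral>\<^sup>+x. ?d v w x \<partial>?M)"
    using grad_dist2_meas[OF Om u v] grad_dist2_meas[OF Om v w]
    by (simp add: nn_integral_add nn_integral_cmult)
  also have "\<dots> = 2 * grad_dist2 \<Omega> u v + 2 * grad_dist2 \<Omega> v w"
    unfolding grad_dist2_def sn_eq[OF Omeas] ..
  finally show ?thesis .
qed

theorem mainTheorem4:
  fixes \<Omega> :: "(real^'n) set"
    and V :: "(real^'n \<Rightarrow> real) set"
    and D :: "(real^'d) set"
    and M :: "(real^'d) measure"
    and E :: "real^'d \<Rightarrow> (real^'n \<Rightarrow> real) \<Rightarrow> real"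
    and \<alpha> :: real
    and p :: nat
    and Ms :: "(real^'n) set set set"
    and Asol :: "real^'d \<Rightarrow> (real^'n \<Rightarrow> real)"
    and Ah :: "(real^'n) set set \<Rightarrow> real^'d \<Rightarrow> (real^'n \<Rightarrow> real)"
    and Ca :: real
  assumes dom: "bounded_domain \<Omega>"
    and V_sub: "lin_subspace V" "V \<subseteq> H1 \<Omega>"
    and prob: "prob_space M" "space M = D" "sets M = sets (restrict_space borel D)"
    and alpha: "\<alpha> > 0"
    and deg: "p \<ge> 1"
    and meshes: "\<forall>T\<in>Ms. is_mesh \<Omega> T"
    and energy:
      "(\<exists>(A :: real^'d \<Rightarrow> real^'n \<Rightarrow> real^'n^'n) (f :: real^'d \<Rightarrow> real^'n \<Rightarrow> real).
          (\<forall>\<mu>\<in>D. L2 \<Omega> (f \<mu>) \<and> A \<mu> \<in> borel_measurable (lebesgue_on \<Omega>) \<and>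
                  bounded (A \<mu> ` \<Omega>) \<and>
                  (\<forall>x\<in>\<Omega>. \<forall>\<xi>. \<alpha> * (norm \<xi>)\<^sup>2 \<le> \<xi> \<bullet> (A \<mu> x *v \<xi>))) \<and>
          (\<forall>\<mu>\<in>D. \<forall>v\<in>V. E \<mu> v =
              1/2 * (\<integral>x. (A \<mu> x *v weak_grad \<Omega> v x) \<bullet> weak_grad \<Omega> v x \<partial>lebesgue_on \<Omega>)
              - (\<integral>x. f \<mu> x * v x \<partial>lebesgue_on \<Omega>)))
       \<or>
       (\<exists>a :: real^'d \<Rightarrow> real^'n \<Rightarrow> real \<Rightarrow> real.
          (\<forall>\<mu>\<in>D. (\<lambda>(x, s). a \<mu> x s) \<in> borel_measurable borel \<and>
                  (\<forall>x s. a \<mu> x differentiable (at s)) \<and>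
                  (\<exists>\<Lambda>. \<forall>x\<in>\<Omega>. \<forall>s. \<alpha> \<le> a \<mu> x s \<and> a \<mu> x s \<le> \<Lambda>)) \<and>
          (\<forall>\<mu>\<in>D. \<forall>v\<in>V. E \<mu> v =
              1/2 * (\<integral>x. a \<mu> x (v x) * (norm (weak_grad \<Omega> v x))\<^sup>2 \<partial>lebesgue_on \<Omega>)) \<and>
          (\<forall>T\<in>Ms. \<forall>\<mu>\<in>D. \<forall>x\<in>\<Omega>. deriv (a \<mu> x) (Ah T \<mu> x) * Ah T \<mu> x \<ge> 0))"
    and sol: "\<forall>\<mu>\<in>D. Asol \<mu> \<in> V \<and> (\<forall>v\<in>V. E \<mu> (Asol \<mu>) \<le> E \<mu> v)"
    and disc_sol: "\<forall>T\<in>Ms. \<forall>\<mu>\<in>D. Ah T \<mu> \<in> lagrange_fe \<Omega> T p V \<and>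
                     (\<forall>v\<in>lagrange_fe \<Omega> T p V. E \<mu> (Ah T \<mu>) \<le> E \<mu> v)"
    and apriori: "\<forall>T\<in>Ms. \<forall>\<mu>\<in>D. grad_dist2 \<Omega> (Asol \<mu>) (Ah T \<mu>)
                     \<le> ennreal Ca * ennreal (mesh_size T ^ (2*p)) * Dnorm2 \<Omega> (p+1) (Asol \<mu>)"
    and meas_D: "(\<lambda>\<mu>. Dnorm2 \<Omega> (p+1) (Asol \<mu>)) \<in> borel_measurable M"
  shows "\<exists>C>0. \<forall>T\<in>Ms. \<forall>(A\<theta> :: real^'d \<Rightarrow> (real^'n \<Rightarrow> real)) (\<epsilon>::real).
           (\<forall>\<mu>\<in>D. A\<theta> \<mu> \<in> lagrange_fe \<Omega> T p V) \<and> \<epsilon> > 0 \<and>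
           (\<lambda>\<mu>. ennreal (E \<mu> (A\<theta> \<mu>) - E \<mu> (Ah T \<mu>))) \<in> borel_measurable M \<and>
           (\<integral>\<^sup>+\<mu>. ennreal (E \<mu> (A\<theta> \<mu>) - E \<mu> (Ah T \<mu>)) \<partial>M) \<le> ennreal \<epsilon>
           \<longrightarrow>
           (\<integral>\<^sup>+\<mu>. grad_dist2 \<Omega> (Asol \<mu>) (A\<theta> \<mu>) \<partial>M)
             \<le> ennreal C * (ennreal (mesh_size T ^ (2*p)) * (\<integral>\<^sup>+\<mu>. Dnorm2 \<Omega> (p+1) (Asol \<mu>) \<partial>M)
                            + ennreal \<epsilon>)"
proof -
  have Om: "open \<Omega>" using dom unfolding bounded_domain_def by blast
  have lV: "lagrange_fe \<Omega> T p V \<subseteq> V" for T by (auto simp: lagrange_fe_def)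
  have WH: "lagrange_fe \<Omega> T p V \<subseteq> H1 \<Omega>" for T using lV V_sub(2) by blast
  have key: "grad_dist2 \<Omega> (Ah T \<mu>) v\<theta> \<le> ennreal ((2/\<alpha>) * (E \<mu> v\<theta> - E \<mu> (Ah T \<mu>)))"
    if T: "T \<in> Ms" and \<mu>: "\<mu> \<in> D" and vt: "v\<theta> \<in> lagrange_fe \<Omega> T p V" for T \<mu> v\<theta>
  proof -
    let ?W = "lagrange_fe \<Omega> T p V"
    have uh: "Ah T \<mu> \<in> ?W" and min: "\<And>v. v \<in> ?W \<Longrightarrow> E \<mu> (Ah T \<mu>) \<le> E \<mu> v"
      using disc_sol T \<mu> by auto
    from energy show ?thesis
    proof
      assume "\<exists>(A :: real^'d \<Rightarrow> real^'n \<Rightarrow> real^'n^'n) (f :: real^'d \<Rightarrow> real^'n \<Rightarrow> real).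
          (\<forall>\<mu>\<in>D. L2 \<Omega> (f \<mu>) \<and> A \<mu> \<in> borel_measurable (lebesgue_on \<Omega>) \<and>
                  bounded (A \<mu> ` \<Omega>) \<and>
                  (\<forall>x\<in>\<Omega>. \<forall>\<xi>. \<alpha> * (norm \<xi>)\<^sup>2 \<le> \<xi> \<bullet> (A \<mu> x *v \<xi>))) \<and>
          (\<forall>\<mu>\<in>D. \<forall>v\<in>V. E \<mu> v =
              1/2 * (\<integral>x. (A \<mu> x *v weak_grad \<Omega> v x) \<bullet> weak_grad \<Omega> v x \<partial>lebesgue_on \<Omega>)
              - (\<integral>x. f \<mu> x * v x \<partial>lebesgue_on \<Omega>))"
      then obtain A :: "real^'d \<Rightarrow> real^'n \<Rightarrow> real^'n^'n" and f :: "real^'d \<Rightarrow> real^'n \<Rightarrow> real"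
        where c: "\<forall>\<mu>\<in>D. L2 \<Omega> (f \<mu>) \<and> A \<mu> \<in> borel_measurable (lebesgue_on \<Omega>) \<and>
                  bounded (A \<mu> ` \<Omega>) \<and>
                  (\<forall>x\<in>\<Omega>. \<forall>\<xi>. \<alpha> * (norm \<xi>)\<^sup>2 \<le> \<xi> \<bullet> (A \<mu> x *v \<xi>))"
          and e: "\<forall>\<mu>\<in>D. \<forall>v\<in>V. E \<mu> v =
              1/2 * (\<integral>x. (A \<mu> x *v weak_grad \<Omega> v x) \<bullet> weak_grad \<Omega> v x \<partial>lebesgue_on \<Omega>)
              - (\<integral>x. f \<mu> x * v x \<partial>lebesgue_on \<Omega>)"
        by blast
      have c\<mu>: "L2 \<Omega> (f \<mu>)" "A \<mu> \<in> borel_measurable (lebesgue_on \<Omega>)" "bounded (A \<mu> ` \<Omega>)"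
        "\<forall>x\<in>\<Omega>. \<forall>\<xi>. \<alpha> * (norm \<xi>)\<^sup>2 \<le> \<xi> \<bullet> (A \<mu> x *v \<xi>)"
        using c \<mu> by auto
      have e\<mu>: "\<forall>v\<in>?W. E \<mu> v =
              1/2 * (\<integral>x. (A \<mu> x *v weak_grad \<Omega> v x) \<bullet> weak_grad \<Omega> v x \<partial>lebesgue_on \<Omega>)
              - (\<integral>x. f \<mu> x * v x \<partial>lebesgue_on \<Omega>)"
        using e \<mu> lV by blast
      show ?thesis
        by (rule case1_bound[OF Om alpha c\<mu>(1) c\<mu>(2) c\<mu>(3) c\<mu>(4) e\<mu> WH uh vt
              lfe_lin[OF V_sub(1) uh vt] min])
    next
      assume "\<exists>a :: real^'d \<Rightarrow> real^'n \<Rightarrow> real \<Rightarrow> real.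
          (\<forall>\<mu>\<in>D. (\<lambda>(x, s). a \<mu> x s) \<in> borel_measurable borel \<and>
                  (\<forall>x s. a \<mu> x differentiable (at s)) \<and>
                  (\<exists>\<Lambda>. \<forall>x\<in>\<Omega>. \<forall>s. \<alpha> \<le> a \<mu> x s \<and> a \<mu> x s \<le> \<Lambda>)) \<and>
          (\<forall>\<mu>\<in>D. \<forall>v\<in>V. E \<mu> v =
              1/2 * (\<integral>x. a \<mu> x (v x) * (norm (weak_grad \<Omega> v x))\<^sup>2 \<partial>lebesgue_on \<Omega>)) \<and>
          (\<forall>T\<in>Ms. \<forall>\<mu>\<in>D. \<forall>x\<in>\<Omega>. deriv (a \<mu> x) (Ah T \<mu> x) * Ah T \<mu> x \<ge> 0)"
      then obtain a :: "real^'d \<Rightarrow> real^'n \<Rightarrow> real \<Rightarrow> real"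
        where c: "\<forall>\<mu>\<in>D. (\<lambda>(x, s). a \<mu> x s) \<in> borel_measurable borel \<and>
                  (\<forall>x s. a \<mu> x differentiable (at s)) \<and>
                  (\<exists>\<Lambda>. \<forall>x\<in>\<Omega>. \<forall>s. \<alpha> \<le> a \<mu> x s \<and> a \<mu> x s \<le> \<Lambda>)"
          and e: "\<forall>\<mu>\<in>D. \<forall>v\<in>V. E \<mu> v =
              1/2 * (\<integral>x. a \<mu> x (v x) * (norm (weak_grad \<Omega> v x))\<^sup>2 \<partial>lebesgue_on \<Omega>)"
        by blast
      have am: "(\<lambda>(x, s). a \<mu> x s) \<in> borel_measurable borel" using c \<mu> by blast
      obtain \<Lambda> where ab: "\<forall>x\<in>\<Omega>. \<forall>s. \<alpha> \<le> a \<mu> x s \<and> a \<mu> x s \<le> \<Lambda>" using c \<mu> by blast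
      have e\<mu>: "\<forall>v\<in>?W. E \<mu> v = 1/2 * (\<integral>x. a \<mu> x (v x) * (norm (weak_grad \<Omega> v x))\<^sup>2 \<partial>lebesgue_on \<Omega>)"
        using e \<mu> lV by blast
      show ?thesis
        by (rule case2_bound[OF Om alpha am ab e\<mu> WH uh vt lfe_zero[OF V_sub(1)] min])
    qed
  qed
  define C where "C = 2 * max Ca 0 + 4 / \<alpha>"
  have Cpos: "0 < C" using alpha by (simp add: C_def add_nonneg_pos)
  have C1: "2 * ennreal Ca \<le> ennreal C"
  proof -
    have "2 * ennreal Ca = ennreal (2 * Ca)" by (simp add: ennreal_mult')
    also have "\<dots> \<le> ennreal C"
    proof (rule ennreal_leI)
      have "0 \<le> 4 / \<alpha>" using alpha by simp
      moreover have "Ca \<le> max Ca 0" by simp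
      ultimately show "2 * Ca \<le> C" unfolding C_def by linarith
    qed
    finally show ?thesis .
  qed
  have C2: "ennreal (4 / \<alpha>) \<le> ennreal C" using alpha by (intro ennreal_leI) (simp add: C_def)
  show ?thesis
  proof (intro exI[of _ C] conjI ballI allI impI Cpos)
    fix T A\<theta> \<epsilon>
    assume T: "T \<in> Ms"
    assume H: "(\<forall>\<mu>\<in>D. A\<theta> \<mu> \<in> lagrange_fe \<Omega> T p V) \<and> \<epsilon> > 0 \<and>
           (\<lambda>\<mu>. ennreal (E \<mu> (A\<theta> \<mu>) - E \<mu> (Ah T \<mu>))) \<in> borel_measurable M \<and>
           (\<integral>\<^sup>+\<mu>. ennreal (E \<mu> (A\<theta> \<mu>) - E \<mu> (Ah T \<mu>)) \<partial>M) \<le> ennreal \<epsilon>"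
    then have At: "\<And>\<mu>. \<mu> \<in> D \<Longrightarrow> A\<theta> \<mu> \<in> lagrange_fe \<Omega> T p V"
      and dEm: "(\<lambda>\<mu>. ennreal (E \<mu> (A\<theta> \<mu>) - E \<mu> (Ah T \<mu>))) \<in> borel_measurable M"
      and dEi: "(\<integral>\<^sup>+\<mu>. ennreal (E \<mu> (A\<theta> \<mu>) - E \<mu> (Ah T \<mu>)) \<partial>M) \<le> ennreal \<epsilon>"
      by auto
    define h where "h = ennreal (mesh_size T ^ (2*p))"
    define Dn where "Dn \<mu> = Dnorm2 \<Omega> (p+1) (Asol \<mu>)" for \<mu>
    define dE where "dE \<mu> = ennreal (E \<mu> (A\<theta> \<mu>) - E \<mu> (Ah T \<mu>))" for \<mu>
    have pt: "grad_dist2 \<Omega> (Asol \<mu>) (A\<theta> \<mu>) \<le> (2 * ennreal Ca * h) * Dn \<mu> + ennreal (4/\<alpha>) * dE \<mu>"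
      if "\<mu> \<in> space M" for \<mu>
    proof -
      have \<mu>: "\<mu> \<in> D" using that prob(2) by simp
      have uH: "Asol \<mu> \<in> H1 \<Omega>" using sol \<mu> V_sub(2) by blast
      have hH: "Ah T \<mu> \<in> H1 \<Omega>" using disc_sol T \<mu> WH by blast
      have tH: "A\<theta> \<mu> \<in> H1 \<Omega>" using At[OF \<mu>] WH by blast
      have "grad_dist2 \<Omega> (Asol \<mu>) (A\<theta> \<mu>) \<le> 2 * grad_dist2 \<Omega> (Asol \<mu>) (Ah T \<mu>) + 2 * grad_dist2 \<Omega> (Ah T \<mu>) (A\<theta> \<mu>)"
        by (rule grad_dist2_tri[OF Om uH hH tH])
      also have "\<dots> \<le> 2 * (ennreal Ca * h * Dn \<mu>) + 2 * ennreal ((2/\<alpha>) * (E \<mu> (A\<theta> \<mu>) - E \<mu> (Ah T \<mu>)))"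
        using apriori T \<mu> key[OF T \<mu> At[OF \<mu>]] unfolding h_def Dn_def
        by (intro add_mono mult_left_mono) auto
      also have "2 * ennreal ((2/\<alpha>) * (E \<mu> (A\<theta> \<mu>) - E \<mu> (Ah T \<mu>))) = ennreal (4/\<alpha>) * dE \<mu>"
      proof -
        have "ennreal ((2/\<alpha>) * (E \<mu> (A\<theta> \<mu>) - E \<mu> (Ah T \<mu>))) = ennreal (2/\<alpha>) * dE \<mu>"
          unfolding dE_def using alpha by (intro ennreal_mult') simp
        moreover have "2 * ennreal (2/\<alpha>) = ennreal (4/\<alpha>)"
        proof -
          have "ennreal (2 * (2/\<alpha>)) = ennreal 2 * ennreal (2/\<alpha>)" by (rule ennreal_mult') simp
          moreover have "2 * (2/\<alpha>) = 4/\<alpha>" by simp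
          ultimately show ?thesis by simp
        qed
        ultimately show ?thesis by (simp add: mult.assoc[symmetric])
      qed
      finally show ?thesis by (simp add: mult.assoc)
    qed
    have "(\<integral>\<^sup>+\<mu>. grad_dist2 \<Omega> (Asol \<mu>) (A\<theta> \<mu>) \<partial>M) \<le> (\<integral>\<^sup>+\<mu>. (2 * ennreal Ca * h) * Dn \<mu> + ennreal (4/\<alpha>) * dE \<mu> \<partial>M)"
      by (rule nn_integral_mono) (rule pt)
    also have "\<dots> = (2 * ennreal Ca * h) * (\<integral>\<^sup>+\<mu>. Dn \<mu> \<partial>M) + ennreal (4/\<alpha>) * (\<integral>\<^sup>+\<mu>. dE \<mu> \<partial>M)"
    proof -
      have m1: "Dn \<in> borel_measurable M" using meas_D unfolding Dn_def[abs_def] .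
      have m2: "dE \<in> borel_measurable M" using dEm unfolding dE_def[abs_def] .
      show ?thesis using m1 m2 by (simp add: nn_integral_add nn_integral_cmult)
    qed
    also have "\<dots> \<le> ennreal C * (h * (\<integral>\<^sup>+\<mu>. Dn \<mu> \<partial>M)) + ennreal C * ennreal \<epsilon>"
    proof (rule add_mono)
      show "2 * ennreal Ca * h * (\<integral>\<^sup>+\<mu>. Dn \<mu> \<partial>M) \<le> ennreal C * (h * (\<integral>\<^sup>+\<mu>. Dn \<mu> \<partial>M))"
        unfolding mult.assoc[symmetric] using C1 by (intro mult_right_mono) auto
      show "ennreal (4/\<alpha>) * (\<integral>\<^sup>+\<mu>. dE \<mu> \<partial>M) \<le> ennreal C * ennreal \<epsilon>"
        using C2 dEi unfolding dE_def by (intro mult_mono) auto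
    qed
    also have "\<dots> = ennreal C * (h * (\<integral>\<^sup>+\<mu>. Dn \<mu> \<partial>M) + ennreal \<epsilon>)"
      by (simp add: distrib_left)
    finally show "(\<integral>\<^sup>+\<mu>. grad_dist2 \<Omega> (Asol \<mu>) (A\<theta> \<mu>) \<partial>M)
             \<le> ennreal C * (ennreal (mesh_size T ^ (2*p)) * (\<integral>\<^sup>+\<mu>. Dnorm2 \<Omega> (p+1) (Asol \<mu>) \<partial>M)
                            + ennreal \<epsilon>)"
      unfolding h_def Dn_def .
  qed
qed

end
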